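(* Let $q$ be a prime power, $n\ge1$, and $k$ an integer with $(n-1)(q-1)<k<n(q-1)-\frac{q-1}{2}$. Put $\ell=n(q-1)-k$. Then \[\dim(\operatorname{Hull}(C_{n,k}^q))=\dim(C_{n,\ell}^q)-(2\ell+1-(q-1))=\binom{n+\ell}{\ell}-(2\ell+1-(q-1)).\]
   Context: For a prime power $q$ and integers $n\ge 1$, $k\ge 0$, the projective Reed-Muller code $C_{n,k}^q\subseteq \mathbb{F}_q^N$, $N=\frac{q^{n+1}-1}{q-1}$, is defined as follows. For each point of $\mathbb{P}^n(\mathbb{F}_q)$ choose the affine representative $(p_0,\dots,p_n)\in\mathbb{F}_q^{n+1}\setminus\{0\}$ whose left-most nonzero coordinate equals $1$, and fix an ordering $P_1',\dots,P_N'$ of these representatives. Then $C_{n,k}^q=\{(F(P_1'),\dots,F(P_N')) : F\in \mathbb{F}_q[x_0,\dots,x_n]_k\}$, where $\mathbb{F}_q[x_0,\dots,x_n]_k$ is the space of homogeneous polynomials of degree $k$ together with $0$. Duals are with respect to the standard dot product, and $\operatorname{Hull}(C)=C\cap C^\perp$. *)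

theory Defs
  imports Complex_Main "HOL-Library.Function_Algebras"
begin

definition proj_points :: "nat \<Rightarrow> ('a::field) list set" where
  "proj_points n = {p. length p = n + 1 \<and>
      (\<exists>i < n + 1. p ! i = 1 \<and> (\<forall>j < i. p ! j = 0))}"

definition monomials :: "nat \<Rightarrow> nat \<Rightarrow> (nat \<Rightarrow> nat) set" where
  "monomials n k = {e. (\<forall>i > n. e i = 0) \<and> (\<Sum>i\<le>n. e i) = k}"

definition mon_eval :: "(nat \<Rightarrow> nat) \<Rightarrow> nat \<Rightarrow> ('a::field) list \<Rightarrow> 'a" where
  "mon_eval e n p = (\<Prod>i\<le>n. (p ! i) ^ e i)"

text \<open>Codewords are functions on the point set (zero outside it); a homogeneous
polynomial of degree k is given by its coefficient function c on the monomials.\<close>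
definition PRM :: "nat \<Rightarrow> nat \<Rightarrow> (('a::{field,finite}) list \<Rightarrow> 'a) set" where
  "PRM n k = {v. \<exists>c :: (nat \<Rightarrow> nat) \<Rightarrow> 'a. \<forall>p.
      v p = (if p \<in> proj_points n then (\<Sum>e\<in>monomials n k. c e * mon_eval e n p) else 0)}"

definition dual_code :: "nat \<Rightarrow> (('a::field) list \<Rightarrow> 'a) set \<Rightarrow> ('a list \<Rightarrow> 'a) set" where
  "dual_code n C = {v. (\<forall>p. p \<notin> proj_points n \<longrightarrow> v p = 0) \<and>
      (\<forall>c\<in>C. (\<Sum>p\<in>proj_points n. v p * c p) = 0)}"

definition hull_code :: "nat \<Rightarrow> (('a::field) list \<Rightarrow> 'a) set \<Rightarrow> ('a list \<Rightarrow> 'a) set" where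
  "hull_code n C = C \<inter> dual_code n C"

definition fscale :: "'a::field \<Rightarrow> ('b \<Rightarrow> 'a) \<Rightarrow> ('b \<Rightarrow> 'a)" where
  "fscale c f = (\<lambda>x. c * f x)"

definition code_dim :: "(('a::field) list \<Rightarrow> 'a) set \<Rightarrow> nat" where
  "code_dim C = vector_space.dim fscale C"

end

theory Submission
  imports Defs "HOL-Library.Multiset" "HOL-Computational_Algebra.Polynomial"
begin

lemma card_ge2: "card (UNIV::'a::{field,finite} set) \<ge> 2"
proof -
  have "{0::'a, 1} \<subseteq> UNIV" by simp
  hence "card {0::'a,1} \<le> card (UNIV::'a set)" by (intro card_mono) auto
  thus ?thesis by simp
qed

lemma fermat_ff:
  fixes x :: "'a::{field,finite}"
  assumes "x \<noteq> 0"
  shows "x ^ (card (UNIV::'a set) - 1) = 1"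
proof -
  let ?U = "UNIV - {0::'a}"
  have cU: "card ?U = card (UNIV::'a set) - 1" by (simp add: card_Diff_singleton)
  have bij: "bij_betw (\<lambda>y. x * y) ?U ?U"
    by (rule bij_betw_byWitness[where f'="\<lambda>y. y / x"]) (use assms in auto)
  have "prod id ?U = prod (\<lambda>y. x * y) ?U"
    using prod.reindex_bij_betw[OF bij, of id] by simp
  also have "\<dots> = x ^ card ?U * prod id ?U" by (simp add: prod.distrib)
  finally have "(x ^ card ?U - 1) * prod id ?U = 0" by (simp add: algebra_simps)
  moreover have "prod id ?U \<noteq> 0" by (simp add: prod_zero_iff)
  ultimately show ?thesis using cU by simp
qed

lemma char_card:
  "(of_nat (card (UNIV::'a::{field,finite} set)) :: 'a) = 0"
proof -
  have bij: "bij_betw (\<lambda>t::'a. t + 1) UNIV UNIV"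
    by (rule bij_betw_byWitness[where f'="\<lambda>t. t - 1"]) auto
  have "(\<Sum>t\<in>(UNIV::'a set). t + 1) = (\<Sum>t\<in>UNIV. t)"
    using sum.reindex_bij_betw[OF bij, of id] by simp
  hence "(\<Sum>t\<in>(UNIV::'a set). (1::'a)) = 0" by (simp add: sum.distrib)
  thus ?thesis by simp
qed

definition S :: "nat \<Rightarrow> 'a::{field,finite}" where
  "S c = (\<Sum>t\<in>UNIV. t ^ c)"

lemma S_0: "(S 0 :: 'a::{field,finite}) = 0"
  using char_card by (simp add: S_def)

lemma pow_mod_ff:
  fixes x :: "'a::{field,finite}"
  assumes "x \<noteq> 0"
  shows "x ^ c = x ^ (c mod (card (UNIV::'a set) - 1))"
proof -
  let ?m = "card (UNIV::'a set) - 1"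
  have "c = ?m * (c div ?m) + c mod ?m" by simp
  hence "x ^ c = (x ^ ?m) ^ (c div ?m) * x ^ (c mod ?m)"
    by (metis power_add power_mult)
  thus ?thesis using fermat_ff[OF assms] by simp
qed

lemma S_dvd:
  assumes "c > 0" "(card (UNIV::'a::{field,finite} set) - 1) dvd c"
  shows "(S c :: 'a) = -1"
proof -
  have tc: "\<And>t::'a. t ^ c = (if t = 0 then 0 else 1)"
  proof -
    fix t :: 'a
    show "t ^ c = (if t = 0 then 0 else 1)"
    proof (cases "t = 0")
      case True thus ?thesis using assms by simp
    next
      case False thus ?thesis using pow_mod_ff[OF False, of c] assms(2) by simp
    qed
  qed
  have "(S c::'a) = (\<Sum>t\<in>(UNIV::'a set). if t = 0 then 0 else 1)" unfolding S_def
    by (rule sum.cong[OF refl]) (rule tc)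
  also have "\<dots> = (\<Sum>t\<in>UNIV - {0::'a}. 1)"
    by (simp add: sum.If_cases Diff_eq Int_commute)
  also have "\<dots> = of_nat (card (UNIV::'a set) - 1)" by (simp add: card_Diff_singleton)
  also have "\<dots> = of_nat (card (UNIV::'a set)) - 1" using card_ge2[where 'a='a] by (simp add: of_nat_diff)
  finally show ?thesis using char_card[where 'a='a] by simp
qed

lemma exists_pow_ne1:
  assumes "0 < r" "r < card (UNIV::'a::{field,finite} set) - 1"
  shows "\<exists>x::'a. x \<noteq> 0 \<and> x ^ r \<noteq> 1"
proof (rule ccontr)
  assume "\<not> ?thesis"
  hence H: "\<And>x::'a. x \<noteq> 0 \<Longrightarrow> x ^ r = 1" by blast
  define p :: "'a poly" where "p = monom 1 r - [:1:]"
  have "coeff p r = 1" using assms by (cases r) (auto simp: p_def)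
  hence p0: "p \<noteq> 0" by auto
  have "degree p \<le> r" unfolding p_def
    by (rule degree_diff_le) (auto simp: degree_monom_le)
  have "UNIV - {0::'a} \<subseteq> {x. poly p x = 0}"
    using H by (auto simp: p_def poly_monom)
  hence "card (UNIV - {0::'a}) \<le> card {x. poly p x = 0}"
    by (intro card_mono) auto
  also have "\<dots> \<le> degree p" by (rule card_poly_roots_bound[OF p0])
  finally show False using \<open>degree p \<le> r\<close> assms by (simp add: card_Diff_singleton)
qed

lemma S_ndvd:
  assumes "\<not> (card (UNIV::'a::{field,finite} set) - 1) dvd c"
  shows "(S c :: 'a) = 0"
proof -
  let ?m = "card (UNIV::'a set) - 1"
  have m1: "?m \<ge> 1" using card_ge2[where 'a='a] by simp
  have "0 < c mod ?m" using assms by (simp add: dvd_eq_mod_eq_0)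
  moreover have "c mod ?m < ?m" using m1 by simp
  ultimately obtain x :: 'a where x: "x \<noteq> 0" "x ^ (c mod ?m) \<noteq> 1"
    using exists_pow_ne1 by blast
  have xc: "x ^ c \<noteq> 1" using x pow_mod_ff[OF x(1)] by simp
  have bij: "bij_betw (\<lambda>t::'a. x * t) UNIV UNIV"
    by (rule bij_betw_byWitness[where f'="\<lambda>t. t / x"]) (use x in auto)
  have "S c = (\<Sum>t\<in>(UNIV::'a set). (x * t) ^ c)"
    unfolding S_def using sum.reindex_bij_betw[OF bij, of "\<lambda>t. t ^ c"] by simp
  also have "\<dots> = x ^ c * S c" by (simp add: S_def power_mult_distrib sum_distrib_left)
  finally have "(1 - x ^ c) * S c = 0" by (simp add: algebra_simps)
  thus ?thesis using xc by simp
qed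

lemma S_ne0_iff:
  "(S c :: 'a::{field,finite}) \<noteq> 0 \<longleftrightarrow> c > 0 \<and> (card (UNIV::'a set) - 1) dvd c"
  using S_0 S_dvd S_ndvd by (metis gr0I neg_0_equal_iff_equal zero_neq_one)


definition tle :: "(nat \<Rightarrow> nat) \<Rightarrow> nat \<Rightarrow> nat" where
  "tle e = (\<lambda>i. e (Suc i))"

lemma tle_apply: "tle e i = e (Suc i)" by (simp add: tle_def)
declare tle_def[simp]

lemma mon_eval_Cons:
  "mon_eval e (Suc n) (x # xs) = x ^ e 0 * mon_eval (tle e) n xs"
  unfolding mon_eval_def prod.atMost_Suc_shift by simp

lemma mon_eval_0: "mon_eval e 0 [x] = x ^ e 0"
  unfolding mon_eval_def by simp

definition LL :: "nat \<Rightarrow> 'a list set" where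
  "LL r = {xs. length xs = r}"

lemma finite_LL[simp]: "finite (LL r :: ('a::finite) list set)"
  unfolding LL_def using finite_lists_length_eq[of "UNIV::'a set" r] by simp

lemma LL_Suc: "LL (Suc r) = (\<lambda>(x, ys). x # ys) ` (UNIV \<times> LL r)"
  unfolding LL_def by (auto simp: length_Suc_conv)

lemma sum_LL_Suc:
  "(\<Sum>y\<in>LL (Suc r). f y) = (\<Sum>x\<in>(UNIV::'a::finite set). \<Sum>ys\<in>LL r. f (x # ys))"
proof -
  have inj: "inj_on (\<lambda>(x, ys). x # ys) (UNIV \<times> (LL r :: 'a list set))"
    by (auto simp: inj_on_def)
  have "(\<Sum>y\<in>LL (Suc r). f y) = (\<Sum>z\<in>UNIV \<times> (LL r :: 'a list set). f (fst z # snd z))"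
    unfolding LL_Suc by (subst sum.reindex[OF inj]) (simp add: case_prod_beta)
  also have "\<dots> = (\<Sum>x\<in>(UNIV::'a set). \<Sum>ys\<in>LL r. f (x # ys))"
    by (subst sum.cartesian_product) (simp add: case_prod_beta)
  finally show ?thesis .
qed

lemma LL_0: "LL 0 = {[]}" unfolding LL_def by auto

lemma sum_LL_mon:
  "(\<Sum>y\<in>LL (Suc n). mon_eval e n y) = (\<Prod>i\<le>n. (S (e i) :: 'a::{field,finite}))"
proof (induction n arbitrary: e)
  case 0
  show ?case by (simp add: sum_LL_Suc LL_0 mon_eval_0 S_def)
next
  case (Suc n)
  have "(\<Sum>y\<in>LL (Suc (Suc n)). mon_eval e (Suc n) y)
      = (\<Sum>x\<in>(UNIV::'a set). x ^ e 0 * (\<Sum>ys\<in>LL (Suc n). mon_eval (tle e) n ys))"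
    by (simp add: sum_LL_Suc mon_eval_Cons sum_distrib_left)
  also have "\<dots> = (\<Sum>x\<in>(UNIV::'a set). x ^ e 0) * (\<Prod>i\<le>n. S (e (Suc i)))"
    using Suc.IH[of "tle e"] by (simp add: sum_distrib_right tle_def)
  also have "\<dots> = S (e 0) * (\<Prod>i\<le>n. S (e (Suc i)))" by (simp add: S_def)
  also have "\<dots> = (\<Prod>i\<le>Suc n. S (e i))"
    by (subst prod.atMost_Suc_shift) simp
  finally show ?case .
qed

lemma proj_points_0: "proj_points 0 = {[1]}"
  unfolding proj_points_def by (auto simp: length_Suc_conv)

lemma proj_points_Suc:
  "proj_points (Suc n) = Cons 0 ` proj_points n \<union> Cons 1 ` LL (Suc n)"
proof (intro set_eqI iffI)
  fix p :: "'a list"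
  assume "p \<in> proj_points (Suc n)"
  then obtain i where L: "length p = Suc (Suc n)" and i: "i < Suc (Suc n)" "p ! i = 1"
      "\<forall>j<i. p ! j = 0"
    unfolding proj_points_def by auto
  then obtain x xs where p: "p = x # xs" and lxs: "length xs = Suc n"
    by (auto simp: length_Suc_conv)
  show "p \<in> Cons 0 ` proj_points n \<union> Cons 1 ` LL (Suc n)"
  proof (cases i)
    case 0
    thus ?thesis using i p lxs by (auto simp: LL_def)
  next
    case (Suc i')
    have x0: "x = 0" using i(3) p Suc by auto
    have "xs \<in> proj_points n"
      unfolding proj_points_def
    proof (intro CollectI conjI exI)
      show "length xs = n + 1" using lxs by simp
      show "i' < n + 1" using i Suc by simp
      show "xs ! i' = 1" using i(2) p Suc by simp
      show "\<forall>j<i'. xs ! j = 0"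
      proof (intro allI impI)
        fix j assume "j < i'"
        thus "xs ! j = 0" using i(3)[rule_format, of "Suc j"] p Suc by simp
      qed
    qed
    thus ?thesis using p x0 by blast
  qed
next
  fix p :: "'a list"
  assume "p \<in> Cons 0 ` proj_points n \<union> Cons 1 ` LL (Suc n)"
  thus "p \<in> proj_points (Suc n)"
  proof
    assume "p \<in> Cons 0 ` proj_points n"
    then obtain xs i where p: "p = 0 # xs" and L: "length xs = n + 1" and i: "i < n + 1"
        "xs ! i = 1" "\<forall>j<i. xs ! j = 0"
      unfolding proj_points_def by blast
    show ?thesis unfolding proj_points_def
    proof (intro CollectI conjI exI)
      show "length p = Suc n + 1" using p L by simp
      show "Suc i < Suc n + 1" using i by simp
      show "p ! Suc i = 1" using p i by simp
      show "\<forall>j<Suc i. p ! j = 0"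
        using p i(3) by (auto simp: less_Suc_eq_0_disj)
    qed
  next
    assume "p \<in> Cons 1 ` LL (Suc n)"
    then obtain xs where p: "p = 1 # xs" "length xs = Suc n" by (auto simp: LL_def)
    show ?thesis unfolding proj_points_def
      by (intro CollectI conjI exI[of _ 0]) (use p in auto)
  qed
qed

lemma finite_proj_points[simp]: "finite (proj_points n :: ('a::{field,finite}) list set)"
  unfolding proj_points_def by (rule finite_subset[OF _ finite_lists_length_eq[of UNIV "n+1"]]) auto

lemma proj_points_length: "p \<in> proj_points n \<Longrightarrow> length p = Suc n"
  unfolding proj_points_def by auto

definition T :: "nat \<Rightarrow> (nat \<Rightarrow> nat) \<Rightarrow> 'a::{field,finite}" where
  "T n c = (\<Sum>p\<in>proj_points n. mon_eval c n p)"

lemma T_0: "T 0 c = 1"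
  by (simp add: T_def proj_points_0 mon_eval_0)

lemma sum_proj_Suc:
  "(\<Sum>p\<in>proj_points (Suc n). f p) =
     (\<Sum>p\<in>proj_points n. f (0 # p)) + (\<Sum>y\<in>LL (Suc n). f ((1::'a::{field,finite}) # y))"
proof -
  have d: "Cons 0 ` proj_points n \<inter> Cons (1::'a) ` LL (Suc n) = {}" by auto
  have "(\<Sum>p\<in>proj_points (Suc n). f p) = (\<Sum>p\<in>Cons 0 ` proj_points n. f p) + (\<Sum>p\<in>Cons 1 ` LL (Suc n). f p)"
    unfolding proj_points_Suc by (rule sum.union_disjoint) (use d in auto)
  also have "\<dots> = (\<Sum>p\<in>proj_points n. f (0 # p)) + (\<Sum>y\<in>LL (Suc n). f (1 # y))"
    by (simp add: sum.reindex)
  finally show ?thesis .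
qed

definition tot :: "nat \<Rightarrow> (nat \<Rightarrow> nat) \<Rightarrow> nat" where
  "tot n c = (\<Sum>i\<le>n. c i)"

lemma tot_Suc: "tot (Suc n) c = c 0 + tot n (tle c)"
  unfolding tot_def sum.atMost_Suc_shift by simp

lemma tot_0: "tot 0 c = c 0" by (simp add: tot_def)


lemma prod_S_ne0:
  fixes c :: "nat \<Rightarrow> nat" and n :: nat
  assumes "(\<Prod>i\<le>n. (S (c i) :: 'a::{field,finite})) \<noteq> 0"
  shows "\<forall>i\<le>n. c i > 0 \<and> (card (UNIV::'a set) - 1) dvd c i"
proof (intro allI impI)
  fix i assume i: "i \<le> n"
  have "S (c i) \<noteq> (0::'a)"
  proof
    assume "S (c i) = (0::'a)"
    hence "(\<Prod>i\<le>n. (S (c i) :: 'a)) = 0" using i by (intro prod_zero) auto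
    thus False using assms by simp
  qed
  thus "c i > 0 \<and> (card (UNIV::'a set) - 1) dvd c i" using S_ne0_iff by blast
qed

lemma T_Suc:
  "(T (Suc n) c :: 'a::{field,finite}) = 0 ^ c 0 * T n (tle c) + (\<Prod>i\<le>n. S (c (Suc i)))"
proof -
  have "(T (Suc n) c :: 'a) = (\<Sum>p\<in>proj_points n. 0 ^ c 0 * mon_eval (tle c) n p)
      + (\<Sum>y\<in>LL (Suc n). 1 ^ c 0 * mon_eval (tle c) n y)"
    unfolding T_def sum_proj_Suc mon_eval_Cons ..
  also have "\<dots> = 0 ^ c 0 * T n (tle c) + (\<Prod>i\<le>n. S (c (Suc i)))"
    unfolding T_def by (simp add: sum_distrib_left[symmetric] sum_LL_mon)
  finally show ?thesis .
qed

lemma T_weight0: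
  assumes "(card (UNIV::'a::{field,finite} set) - 1) dvd tot n c" "tot n c > 0"
  shows "(T n c :: 'a) = - (\<Prod>i\<le>n. S (c i))"
  using assms
proof (induction n arbitrary: c)
  case 0
  thus ?case using S_dvd[where 'a='a] by (simp add: T_0 tot_0)
next
  case (Suc n)
  let ?m = "card (UNIV::'a set) - 1"
  show ?case
  proof (cases "c 0 = 0")
    case True
    hence "?m dvd tot n (tle c)" "tot n (tle c) > 0" using Suc.prems by (simp_all add: tot_Suc)
    from Suc.IH[OF this] show ?thesis
      using True unfolding prod.atMost_Suc_shift by (simp add: T_Suc S_0)
  next
    case False
    have T: "T (Suc n) c = (\<Prod>i\<le>n. (S (c (Suc i)) :: 'a))"
      using False by (simp add: T_Suc)
    show ?thesis
    proof (cases "(\<Prod>i\<le>n. (S (c (Suc i)) :: 'a)) = 0")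
      case True
      have "T (Suc n) c = (0::'a)" using T True by simp
      moreover have "(\<Prod>i\<le>Suc n. (S (c i)::'a)) = S (c 0) * (\<Prod>i\<le>n. S (c (Suc i)))"
        by (rule prod.atMost_Suc_shift)
      ultimately show ?thesis using True by simp
    next
      case nz: False
      have "\<forall>i\<le>n. ?m dvd c (Suc i)" using prod_S_ne0[OF nz] by blast
      hence "?m dvd tot n (tle c)" unfolding tot_def by (auto intro: dvd_sum)
      hence "?m dvd c 0" using Suc.prems(1) by (simp add: tot_Suc dvd_add_left_iff)
      hence "S (c 0) = (-1::'a)" using S_dvd False by auto
      thus ?thesis using T unfolding prod.atMost_Suc_shift by simp
    qed
  qed
qed


definition pat1 :: "nat \<Rightarrow> nat \<Rightarrow> nat \<Rightarrow> nat" where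
  "pat1 n s = (\<lambda>j. if j = n then s else 0)"
definition pat2 :: "nat \<Rightarrow> nat \<Rightarrow> nat \<Rightarrow> nat \<Rightarrow> nat" where
  "pat2 n s m = (\<lambda>j. if Suc j = n then s - m else if j = n then m else 0)"

lemma fun_eq_split: "(c = f) \<longleftrightarrow> c 0 = f 0 \<and> (\<lambda>j. c (Suc j)) = (\<lambda>j. f (Suc j))"
proof
  assume "c 0 = f 0 \<and> (\<lambda>j. c (Suc j)) = (\<lambda>j. f (Suc j))"
  hence "\<And>j. c j = f j" by (metis not0_implies_Suc)
  thus "c = f" by blast
qed simp

lemma pat1_Suc: "(\<lambda>j. pat1 (Suc n) s (Suc j)) = pat1 n s" "pat1 (Suc n) s 0 = 0"
  by (auto simp: pat1_def)
lemma pat2_Suc: "(\<lambda>j. pat2 (Suc n) s m (Suc j)) = pat2 n s m"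
    "pat2 (Suc n) s m 0 = (if n = 0 then s - m else 0)"
  by (auto simp: pat2_def)

lemma T_two:
  fixes c :: "nat \<Rightarrow> nat"
  assumes m: "m = card (UNIV::'a::{field,finite} set) - 1"
    and s: "m < s" "s < 2 * m"
    and supp: "\<forall>i>n. c i = 0" and tot: "tot n c = s"
  shows "(T n c :: 'a) = (if c = pat1 n s then 1 else 0) - (if c = pat2 n s m then 1 else 0)"
  using supp tot
proof (induction n arbitrary: c)
  case 0
  have "c = pat1 0 s"
  proof
    fix j show "c j = pat1 0 s j" using 0 by (cases j) (auto simp: pat1_def tot_0)
  qed
  moreover have "c \<noteq> pat2 0 s m"
  proof
    assume "c = pat2 0 s m"
    hence "c 0 = m" by (simp add: pat2_def)
    thus False using 0 s by (simp add: tot_0)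
  qed
  ultimately show ?case by (simp add: T_0)
next
  case (Suc n)
  let ?d = "\<lambda>j. c (Suc j)"
  have supp': "\<forall>i>n. ?d i = 0" using Suc.prems by auto
  have totd: "tot n ?d = s - c 0" using Suc.prems(2) by (simp add: tot_Suc)
  have TS: "(T (Suc n) c :: 'a) = 0 ^ c 0 * T n ?d + (\<Prod>i\<le>n. S (c (Suc i)))"
    using T_Suc[of n c] by simp
  show ?case
  proof (cases "c 0 = 0")
    case True
    have P0: "(\<Prod>i\<le>n. (S (c (Suc i)) :: 'a)) = 0"
    proof (rule ccontr)
      assume "(\<Prod>i\<le>n. (S (c (Suc i)) :: 'a)) \<noteq> 0"
      from prod_S_ne0[OF this] have "\<forall>i\<le>n. m dvd ?d i" using m by auto
      hence "m dvd tot n ?d" unfolding tot_def by (auto intro: dvd_sum)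
      hence "m dvd s" using totd True by simp
      then obtain r where "s = m * r" by blast
      thus False using s by (cases r; cases "r - 1") auto
    qed
    have IH: "(T n ?d :: 'a) = (if ?d = pat1 n s then 1 else 0) - (if ?d = pat2 n s m then 1 else 0)"
      using Suc.IH[OF supp'] totd True by simp
    have e1: "(c = pat1 (Suc n) s) \<longleftrightarrow> ?d = pat1 n s"
      using True by (subst fun_eq_split) (simp add: pat1_Suc)
    have e2: "(c = pat2 (Suc n) s m) \<longleftrightarrow> ?d = pat2 n s m"
    proof (cases "n = 0")
      case True
      have "?d \<noteq> pat2 n s m"
      proof
        assume "?d = pat2 n s m"
        hence "tot n ?d = m" using True by (simp add: tot_0 pat2_def)
        thus False using totd \<open>c 0 = 0\<close> s by simp
      qed
      moreover have "c \<noteq> pat2 (Suc n) s m"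
        using True \<open>c 0 = 0\<close> s by (auto simp: pat2_def fun_eq_iff)
      ultimately show ?thesis by blast
    next
      case False
      thus ?thesis using \<open>c 0 = 0\<close> by (subst fun_eq_split) (simp add: pat2_Suc)
    qed
    show ?thesis using TS P0 IH e1 e2 True by simp
  next
    case False
    have TS': "(T (Suc n) c :: 'a) = (\<Prod>i\<le>n. S (c (Suc i)))" using TS False by simp
    have n1: "c \<noteq> pat1 (Suc n) s" using False by (auto simp: pat1_def)
    show ?thesis
    proof (cases n)
      case 0
      have c1: "c 1 = s - c 0" using Suc.prems(2) 0 by (simp add: tot_def)
      have S1: "(S (c 1) :: 'a) = (if c 1 = m then -1 else 0)"
      proof (cases "c 1 = m")
        case True
        have "m > 0" using s by simp
        thus ?thesis using True S_dvd[where 'a='a, of "c 1"] m by simp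
      next
        case ne: False
        have "\<not> (m dvd c 1 \<and> c 1 > 0)"
        proof
          assume "m dvd c 1 \<and> c 1 > 0"
          then obtain r where r: "c 1 = m * r" "r > 0" by auto
          have "c 1 < 2 * m" using c1 s by simp
          hence "r < 2" using r by (metis mult_less_cancel1 mult.commute not_less_zero)
          thus False using r ne by (cases r) auto
        qed
        hence "S (c 1) = (0::'a)" using S_ne0_iff[where 'a='a] m by blast
        thus ?thesis using ne by simp
      qed
      have e2: "(c = pat2 (Suc n) s m) \<longleftrightarrow> c 1 = m"
      proof
        assume "c = pat2 (Suc n) s m" thus "c 1 = m" using 0 by (simp add: pat2_def)
      next
        assume "c 1 = m"
        show "c = pat2 (Suc n) s m"
        proof
          fix j
          show "c j = pat2 (Suc n) s m j"
            using Suc.prems(1) 0 c1 \<open>c 1 = m\<close> s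
            by (cases j; cases "j - 1") (auto simp: pat2_def)
        qed
      qed
      show ?thesis using TS' S1 e2 n1 0 by simp
    next
      case (Suc n')
      have P0: "(\<Prod>i\<le>n. (S (c (Suc i)) :: 'a)) = 0"
      proof (rule ccontr)
        assume "(\<Prod>i\<le>n. (S (c (Suc i)) :: 'a)) \<noteq> 0"
        from prod_S_ne0[OF this] have H: "\<forall>i\<le>n. m dvd c (Suc i) \<and> c (Suc i) > 0" using m by auto
        have "c 1 \<ge> m" using H Suc by (metis dvd_imp_le le0 One_nat_def)
        moreover have "c 2 \<ge> m"
        proof -
          have "m dvd c (Suc 1) \<and> 0 < c (Suc 1)" using H Suc by auto
          thus ?thesis by (simp add: dvd_imp_le numeral_2_eq_2)
        qed
        moreover have "c 1 + c 2 \<le> tot (Suc n) c"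
        proof -
          have "c 1 + c 2 = (\<Sum>i\<in>{1,2}. c i)" by simp
          also have "\<dots> \<le> (\<Sum>i\<le>Suc n. c i)" using Suc by (intro sum_mono2) auto
          finally show ?thesis by (simp add: tot_def)
        qed
        ultimately show False using Suc.prems(2) s by simp
      qed
      have "c \<noteq> pat2 (Suc n) s m" using False Suc by (auto simp: pat2_def fun_eq_iff)
      thus ?thesis using TS' P0 n1 by simp
    qed
  qed
qed


definition monl :: "nat \<Rightarrow> (nat \<Rightarrow> nat) \<Rightarrow> 'a::field list \<Rightarrow> 'a" where
  "monl r b y = (\<Prod>i<r. y ! i ^ b i)"

lemma monl_Cons: "monl (Suc r) b (x # y) = x ^ b 0 * monl r (\<lambda>i. b (Suc i)) y"
  unfolding monl_def prod.lessThan_Suc_shift by simp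

lemma mon_eval_monl: "mon_eval b n y = monl (Suc n) b y"
  unfolding mon_eval_def monl_def by (simp add: lessThan_Suc_atMost)

definition consf :: "nat \<Rightarrow> (nat \<Rightarrow> nat) \<Rightarrow> nat \<Rightarrow> nat" where
  "consf j d = (\<lambda>i. case i of 0 \<Rightarrow> j | Suc i' \<Rightarrow> d i')"

lemma consf_tle: "b 0 = j \<Longrightarrow> consf j (\<lambda>i. b (Suc i)) = b"
  unfolding consf_def by (auto split: nat.split)

lemma consf_simps[simp]: "consf j d 0 = j" "consf j d (Suc i) = d i"
  by (auto simp: consf_def)

lemma poly_all_zero:
  fixes g :: "nat \<Rightarrow> 'a::{field,finite}"
  assumes "\<forall>x::'a. (\<Sum>j<card (UNIV::'a set). g j * x ^ j) = 0" "j < card (UNIV::'a set)"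
  shows "g j = 0"
proof -
  let ?q = "card (UNIV::'a set)"
  define p where "p = (\<Sum>j<?q. monom (g j) j)"
  have ev: "poly p x = 0" for x using assms(1) by (simp add: p_def poly_sum poly_monom)
  have dg: "degree p \<le> ?q - 1" unfolding p_def
    by (rule degree_sum_le) (auto intro: order.trans[OF degree_monom_le])
  have "p = 0"
  proof (rule ccontr)
    assume "p \<noteq> 0"
    from card_poly_roots_bound[OF this] have "card {x. poly p x = 0} \<le> degree p" .
    moreover have "{x. poly p x = 0} = UNIV" using ev by auto
    ultimately show False using dg card_ge2[where 'a='a] by simp
  qed
  hence "coeff p j = 0" by simp
  thus ?thesis using assms(2) by (simp add: p_def coeff_sum)
qed

lemma affine_indep:
  fixes S :: "(nat \<Rightarrow> nat) set" and cf :: "(nat \<Rightarrow> nat) \<Rightarrow> 'a::{field,finite}"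
  assumes "finite S" "\<forall>b\<in>S. (\<forall>i\<ge>r. b i = 0) \<and> (\<forall>i<r. b i < card (UNIV::'a set))"
    "\<forall>y\<in>LL r. (\<Sum>b\<in>S. cf b * monl r b y) = 0"
  shows "\<forall>b\<in>S. cf b = 0"
  using assms
proof (induction r arbitrary: S cf)
  case 0
  have "S \<subseteq> {(\<lambda>_. 0)}" using 0(2) by auto
  hence "S = {} \<or> S = {(\<lambda>_. 0)}" by blast
  thus ?case using 0(3) by (auto simp: LL_0 monl_def)
next
  case (Suc r)
  let ?q = "card (UNIV::'a set)"
  let ?Sj = "\<lambda>j. {b\<in>S. b 0 = j}"
  let ?g = "\<lambda>j y. \<Sum>b\<in>?Sj j. cf b * monl r (\<lambda>i. b (Suc i)) y"
  have g0: "?g j y = 0" if y: "y \<in> LL r" and j: "j < ?q" for j y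
  proof -
    have "\<forall>x::'a. (\<Sum>j<?q. ?g j y * x ^ j) = 0"
    proof
      fix x :: 'a
      have "x # y \<in> LL (Suc r)" using y by (simp add: LL_def)
      hence "0 = (\<Sum>b\<in>S. cf b * monl (Suc r) b (x # y))" using Suc.prems(3) by simp
      also have "\<dots> = (\<Sum>j<?q. \<Sum>b\<in>?Sj j. cf b * monl (Suc r) b (x # y))"
        by (rule sum.group[symmetric]) (use Suc.prems(1,2) in auto)
      also have "\<dots> = (\<Sum>j<?q. ?g j y * x ^ j)"
      proof (intro sum.cong refl)
        fix j
        have "(\<Sum>b\<in>?Sj j. cf b * monl (Suc r) b (x # y)) = (\<Sum>b\<in>?Sj j. x ^ j * (cf b * monl r (\<lambda>i. b (Suc i)) y))"
          by (intro sum.cong refl) (auto simp: monl_Cons)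
        also have "\<dots> = ?g j y * x ^ j" by (simp add: sum_distrib_left mult.commute)
        finally show "(\<Sum>b\<in>?Sj j. cf b * monl (Suc r) b (x # y)) = ?g j y * x ^ j" .
      qed
      finally show "(\<Sum>j<?q. ?g j y * x ^ j) = 0" by simp
    qed
    thus ?thesis using poly_all_zero[of "\<lambda>j. ?g j y"] j by blast
  qed
  show ?case
  proof
    fix b assume bS: "b \<in> S"
    let ?j = "b 0"
    have jq: "?j < ?q" using Suc.prems(2) bS by auto
    let ?T = "(\<lambda>b i. b (Suc i)) ` ?Sj ?j"
    let ?cf = "\<lambda>d. cf (consf ?j d)"
    have inj: "inj_on (\<lambda>b i. b (Suc i)) (?Sj ?j)"
    proof (rule inj_onI)
      fix b1 b2 assume "b1 \<in> ?Sj ?j" "b2 \<in> ?Sj ?j" "(\<lambda>i. b1 (Suc i)) = (\<lambda>i. b2 (Suc i))"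
      thus "b1 = b2" by (metis (mono_tags, lifting) consf_tle mem_Collect_eq)
    qed
    have "\<forall>d\<in>?T. ?cf d = 0"
    proof (rule Suc.IH)
      show "finite ?T" using Suc.prems(1) by simp
      show "\<forall>d\<in>?T. (\<forall>i\<ge>r. d i = 0) \<and> (\<forall>i<r. d i < ?q)"
        using Suc.prems(2) by auto
      show "\<forall>y\<in>LL r. (\<Sum>d\<in>?T. ?cf d * monl r d y) = 0"
      proof
        fix y :: "'a list" assume y: "y \<in> LL r"
        have "(\<Sum>d\<in>?T. ?cf d * monl r d y) = ?g ?j y"
          by (subst sum.reindex[OF inj]) (auto intro!: sum.cong simp: consf_tle)
        thus "(\<Sum>d\<in>?T. ?cf d * monl r d y) = 0" using g0[OF y jq] by simp
      qed
    qed
    moreover have "(\<lambda>i. b (Suc i)) \<in> ?T" using bS by auto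
    ultimately show "cf b = 0" using consf_tle[of b ?j] by force
  qed
qed

lemma mon_eval_scale:
  assumes "length p = Suc n"
  shows "mon_eval b n (map ((*) l) p) = l ^ tot n b * mon_eval b n p"
proof -
  have "mon_eval b n (map ((*) l) p) = (\<Prod>i\<le>n. l ^ b i * p ! i ^ b i)"
    unfolding mon_eval_def using assms by (intro prod.cong refl) (simp add: power_mult_distrib)
  also have "\<dots> = l ^ tot n b * mon_eval b n p"
    by (simp add: prod.distrib mon_eval_def tot_def power_sum)
  finally show ?thesis .
qed

lemma normalize_exists:
  fixes y :: "'a::field list"
  assumes "length y = Suc n" "\<exists>i<Suc n. y ! i \<noteq> 0"
  shows "\<exists>l p. l \<noteq> 0 \<and> p \<in> proj_points n \<and> y = map ((*) l) p"
proof -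
  define i where "i = (LEAST i. i < Suc n \<and> y ! i \<noteq> 0)"
  have i: "i < Suc n" "y ! i \<noteq> 0" using LeastI_ex[OF assms(2)] unfolding i_def by auto
  have before: "y ! j = 0" if "j < i" for j
    using not_less_Least[of j "\<lambda>i. i < Suc n \<and> y ! i \<noteq> 0"] that i unfolding i_def by auto
  define l where "l = y ! i"
  define p where "p = map (\<lambda>t. t / l) y"
  have lp: "length p = n + 1" using assms(1) by (simp add: p_def)
  have pi: "p ! i = 1" using i assms(1) by (simp add: p_def l_def)
  have pj: "\<forall>j<i. p ! j = 0"
  proof (intro allI impI)
    fix j assume "j < i"
    thus "p ! j = 0" using before[of j] i assms(1) by (simp add: p_def)
  qed
  have "p \<in> proj_points n" unfolding proj_points_def
    using lp pi pj i by auto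
  moreover have "y = map ((*) l) p"
  proof (rule nth_equalityI)
    show "length y = length (map ((*) l) p)" by (simp add: p_def)
    fix k assume "k < length y"
    thus "y ! k = map ((*) l) p ! k" using i by (simp add: p_def l_def)
  qed
  moreover have "l \<noteq> 0" using i by (simp add: l_def)
  ultimately show ?thesis by blast
qed

lemma proj_indep:
  fixes S :: "(nat \<Rightarrow> nat) set" and cf :: "(nat \<Rightarrow> nat) \<Rightarrow> 'a::{field,finite}"
  defines "m \<equiv> card (UNIV::'a set) - 1"
  assumes "finite S"
    and "\<forall>b\<in>S. (\<forall>i>n. b i = 0) \<and> (\<forall>i\<le>n. b i \<le> m) \<and> tot n b mod m = w"
    and "0 < w" "w < m"
    and "\<forall>p\<in>proj_points n. (\<Sum>b\<in>S. cf b * mon_eval b n p) = 0"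
  shows "\<forall>b\<in>S. cf b = 0"
proof (rule affine_indep[where r="Suc n"])
  show "finite S" by fact
  show "\<forall>b\<in>S. (\<forall>i\<ge>Suc n. b i = 0) \<and> (\<forall>i<Suc n. b i < card (UNIV::'a set))"
  proof (intro ballI conjI allI impI)
    fix b i assume b: "b \<in> S"
    { assume "Suc n \<le> i" thus "b i = 0" using assms(3) b by auto }
    { assume "i < Suc n"
      hence "b i \<le> m" using assms(3) b by auto
      thus "b i < card (UNIV::'a set)" using card_ge2[where 'a='a] unfolding m_def by linarith }
  qed
  show "\<forall>y\<in>LL (Suc n). (\<Sum>b\<in>S. cf b * monl (Suc n) b y) = 0"
  proof
    fix y :: "'a list" assume y: "y \<in> LL (Suc n)"
    show "(\<Sum>b\<in>S. cf b * monl (Suc n) b y) = 0"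
    proof (cases "\<exists>i<Suc n. y ! i \<noteq> 0")
      case True
      then obtain l p where lp: "l \<noteq> 0" "p \<in> proj_points n" "y = map ((*) l) p"
        using normalize_exists y by (metis LL_def mem_Collect_eq)
      have lenp: "length p = Suc n" using proj_points_length[OF lp(2)] .
      have "\<forall>b\<in>S. monl (Suc n) b y = l ^ w * mon_eval b n p"
      proof
        fix b assume "b \<in> S"
        hence "tot n b mod m = w" using assms(3) by auto
        hence "l ^ tot n b = l ^ w" using pow_mod_ff[OF lp(1), of "tot n b"] unfolding m_def by simp
        thus "monl (Suc n) b y = l ^ w * mon_eval b n p"
          using mon_eval_scale[OF lenp] lp(3) by (simp add: mon_eval_monl[symmetric])
      qed
      hence "(\<Sum>b\<in>S. cf b * monl (Suc n) b y) = l ^ w * (\<Sum>b\<in>S. cf b * mon_eval b n p)"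
        by (simp add: sum_distrib_left mult_ac)
      thus ?thesis using assms(6) lp(2) by simp
    next
      case False
      have "\<forall>b\<in>S. monl (Suc n) b y = 0"
      proof
        fix b assume bS: "b \<in> S"
        have "tot n b mod m = w" using assms(3) bS by blast
        hence "tot n b \<noteq> 0" using assms(4) by (metis mod_0 less_irrefl)
        hence "\<exists>i\<in>{..n}. b i \<noteq> 0" unfolding tot_def by (simp add: sum_eq_0_iff)
        then obtain i where "i \<le> n" "b i > 0" by auto
        thus "monl (Suc n) b y = 0" using False unfolding monl_def
          by (intro prod_zero) (auto intro!: bexI[of _ i])
      qed
      thus ?thesis by simp
    qed
  qed
qed


definition RR :: "nat \<Rightarrow> nat \<Rightarrow> (nat \<Rightarrow> nat) set" where
  "RR m n = {b. (\<forall>i>n. b i = 0) \<and> (\<forall>i\<le>n. b i \<le> m)}"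

definition BW :: "nat \<Rightarrow> nat \<Rightarrow> nat \<Rightarrow> (nat \<Rightarrow> nat) set" where
  "BW m n w = {b. (\<forall>i>n. b i = 0) \<and> (\<forall>i\<le>n. b i \<le> m) \<and> tot n b mod m = w}"

lemma RR_0: "RR m 0 = (\<lambda>j. consf j (\<lambda>_. 0)) ` {..m}"
proof (intro set_eqI iffI)
  fix b assume b: "b \<in> RR m 0"
  have "b = consf (b 0) (\<lambda>_. 0)"
  proof
    fix i show "b i = consf (b 0) (\<lambda>_. 0) i" using b by (cases i) (auto simp: RR_def)
  qed
  moreover have "b 0 \<in> {..m}" using b by (auto simp: RR_def)
  ultimately show "b \<in> (\<lambda>j. consf j (\<lambda>_. 0)) ` {..m}" by blast
next
  fix b assume "b \<in> (\<lambda>j. consf j (\<lambda>_. 0)) ` {..m}"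
  then obtain j where "j \<le> m" "b = consf j (\<lambda>_. 0)" by auto
  thus "b \<in> RR m 0" by (auto simp: RR_def consf_def split: nat.split)
qed

lemma RR_Suc: "RR m (Suc n) = (\<lambda>(j, d). consf j d) ` ({..m} \<times> RR m n)"
proof (intro set_eqI iffI)
  fix b assume b: "b \<in> RR m (Suc n)"
  have "b = consf (b 0) (\<lambda>i. b (Suc i))" using consf_tle[of b "b 0"] by simp
  moreover have "(b 0, (\<lambda>i. b (Suc i))) \<in> {..m} \<times> RR m n" using b by (auto simp: RR_def)
  ultimately show "b \<in> (\<lambda>(j, d). consf j d) ` ({..m} \<times> RR m n)" by force
next
  fix b assume "b \<in> (\<lambda>(j, d). consf j d) ` ({..m} \<times> RR m n)"
  then obtain j d where "j \<le> m" "d \<in> RR m n" "b = consf j d" by auto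
  thus "b \<in> RR m (Suc n)" by (auto simp: RR_def consf_def split: nat.split)
qed

lemma inj_consf: "inj_on (\<lambda>(j, d). consf j d) X"
proof (rule inj_onI, clarify)
  fix j d j' d' assume "consf j d = consf j' d'"
  hence "consf j d 0 = consf j' d' 0" "\<forall>i. consf j d (Suc i) = consf j' d' (Suc i)" by auto
  thus "j = j' \<and> d = d'" by auto
qed

lemma finite_RR: "finite (RR m n)"
  by (induction n) (simp_all add: RR_0 RR_Suc)

lemma card_RR: "card (RR m n) = Suc m ^ Suc n"
proof (induction n)
  case 0
  have "inj_on (\<lambda>j. consf j (\<lambda>_. 0)) {..m}"
    by (rule inj_onI) (metis consf_simps(1))
  thus ?case by (simp add: RR_0 card_image)
next
  case (Suc n)
  thus ?case by (simp add: RR_Suc card_image[OF inj_consf] card_cartesian_product)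
qed

lemma BW_sub: "BW m n w \<subseteq> RR m n" by (auto simp: BW_def RR_def)

lemma finite_BW: "finite (BW m n w)"
  using finite_subset[OF BW_sub finite_RR] .

lemma card_LL: "card (LL r :: ('a::finite) list set) = card (UNIV::'a set) ^ r"
  unfolding LL_def using card_lists_length_eq[of "UNIV::'a set" r] by simp

lemma card_proj_Suc:
  "card (proj_points (Suc n) :: ('a::{field,finite}) list set)
     = card (proj_points n :: 'a list set) + card (UNIV::'a set) ^ Suc n"
proof -
  have d: "Cons 0 ` proj_points n \<inter> Cons (1::'a) ` LL (Suc n) = {}" by auto
  have "card (proj_points (Suc n) :: 'a list set) = card (Cons (0::'a) ` proj_points n) + card (Cons (1::'a) ` LL (Suc n))"
    unfolding proj_points_Suc by (rule card_Un_disjoint) (use d in auto)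
  also have "\<dots> = card (proj_points n :: 'a list set) + card (LL (Suc n) :: 'a list set)"
    by (simp add: card_image)
  finally show ?thesis by (simp add: card_LL)
qed

lemma shift_exists:
  fixes w m t :: nat
  assumes "0 < w" "w < m"
  shows "\<exists>j. 1 \<le> j \<and> j \<le> m \<and> (j + t) mod m = w"
proof -
  define r where "r = (t + m - w) mod m"
  define Q where "Q = (t + m - w) div m"
  have rm: "r < m" using assms by (simp add: r_def)
  have eq: "t + m - w = m * Q + r" by (simp add: r_def Q_def)
  have "m - r + t = m * Q + w" using eq rm assms by linarith
  hence "(m - r + t) mod m = w" using assms by simp
  thus ?thesis using rm by (intro exI[of _ "m - r"]) auto
qed

lemma card_BW_ge:
  assumes "0 < w" "w < m" "m = card (UNIV::'a::{field,finite} set) - 1"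
  shows "card (proj_points n :: 'a list set) \<le> card (BW m n w)"
proof (induction n)
  case 0
  have "consf w (\<lambda>_. 0) \<in> BW m 0 w" using assms(1,2)
    by (auto simp: BW_def tot_0 consf_def split: nat.split)
  hence "1 \<le> card (BW m 0 w)" using finite_BW by (metis One_nat_def Suc_leI card_gt_0_iff empty_iff)
  thus ?case by (simp add: proj_points_0)
next
  case (Suc n)
  define jf where "jf d = (SOME j. 1 \<le> j \<and> j \<le> m \<and> (j + tot n d) mod m = w)" for d
  have jf: "1 \<le> jf d \<and> jf d \<le> m \<and> (jf d + tot n d) mod m = w" for d
    unfolding jf_def by (rule someI_ex) (rule shift_exists[OF assms(1,2)])
  let ?A = "consf 0 ` BW m n w"
  let ?B = "(\<lambda>d. consf (jf d) d) ` RR m n"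
  have sub: "?A \<union> ?B \<subseteq> BW m (Suc n) w"
  proof
    fix b assume "b \<in> ?A \<union> ?B"
    thus "b \<in> BW m (Suc n) w"
    proof
      assume "b \<in> ?A"
      then obtain d where "d \<in> BW m n w" "b = consf 0 d" by auto
      thus ?thesis by (auto simp: BW_def tot_Suc consf_def split: nat.split)
    next
      assume "b \<in> ?B"
      then obtain d where d: "d \<in> RR m n" "b = consf (jf d) d" by auto
      thus ?thesis using jf[of d] by (auto simp: BW_def RR_def tot_Suc consf_def split: nat.split)
    qed
  qed
  have disj: "?A \<inter> ?B = {}"
  proof -
    { fix b assume "b \<in> ?A" "b \<in> ?B"
      then obtain x d where "b = consf 0 x" "b = consf (jf d) d" by blast
      hence "b 0 = 0" "b 0 = jf d" by (simp_all, metis consf_simps(1))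
      hence False using jf[of d] by simp }
    thus ?thesis by blast
  qed
  have injA: "inj_on (consf 0) (BW m n w)"
    by (rule inj_onI) (metis consf_simps(2) ext)
  have injB: "inj_on (\<lambda>d. consf (jf d) d) (RR m n)"
    by (rule inj_onI) (metis consf_simps(2) ext)
  have "card (proj_points (Suc n) :: 'a list set) = card (proj_points n :: 'a list set) + card (UNIV::'a set) ^ Suc n"
    by (rule card_proj_Suc)
  also have "\<dots> \<le> card (BW m n w) + card (RR m n)"
    using Suc.IH card_RR[of m n] assms(3) card_ge2[where 'a='a] by simp
  also have "\<dots> = card (?A \<union> ?B)"
    by (subst card_Un_disjoint) (use disj finite_BW finite_RR in \<open>auto simp: card_image injA injB\<close>)
  also have "\<dots> \<le> card (BW m (Suc n) w)"
    by (rule card_mono[OF finite_BW sub])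
  finally show ?case .
qed


interpretation fv: vector_space "fscale :: 'a::field \<Rightarrow> ('b \<Rightarrow> 'a) \<Rightarrow> ('b \<Rightarrow> 'a)"
  by unfold_locales (auto simp: fscale_def fun_eq_iff algebra_simps)

lemma fscale_apply[simp]: "fscale c f x = c * f x" by (simp add: fscale_def)

lemma sum_fun_apply: "(\<Sum>x\<in>A. f x) p = (\<Sum>x\<in>A. f x p)"
  by (induction A rule: infinite_finite_induct) auto

definition mv :: "nat \<Rightarrow> (nat \<Rightarrow> nat) \<Rightarrow> ('a::field) list \<Rightarrow> 'a" where
  "mv n e = (\<lambda>p. if p \<in> proj_points n then mon_eval e n p else 0)"

definition VP :: "nat \<Rightarrow> (('a::field) list \<Rightarrow> 'a) set" where
  "VP n = {u. \<forall>p. p \<notin> proj_points n \<longrightarrow> u p = 0}"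

lemma subspace_VP: "fv.subspace (VP n)"
  unfolding fv.subspace_def VP_def by auto

lemma mv_VP: "mv n e \<in> VP n" by (simp add: mv_def VP_def)

lemma finite_monomials: "finite (monomials n k)"
proof (rule finite_subset[OF _ finite_RR[of k n]])
  show "monomials n k \<subseteq> RR k n"
  proof
    fix e assume e: "e \<in> monomials n k"
    have "\<forall>i\<le>n. e i \<le> k"
    proof (intro allI impI)
      fix i assume "i \<le> n"
      hence "e i \<le> (\<Sum>j\<le>n. e j)" by (intro member_le_sum) auto
      thus "e i \<le> k" using e by (simp add: monomials_def)
    qed
    thus "e \<in> RR k n" using e by (simp add: monomials_def RR_def)
  qed
qed

lemma PRM_span: "(PRM n k :: ('a::{field,finite} list \<Rightarrow> 'a) set) = fv.span (mv n ` monomials n k)"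
proof (intro set_eqI iffI)
  fix v :: "'a list \<Rightarrow> 'a" assume "v \<in> PRM n k"
  then obtain c where c: "\<forall>p. v p = (if p \<in> proj_points n then (\<Sum>e\<in>monomials n k. c e * mon_eval e n p) else 0)"
    unfolding PRM_def by blast
  have "v = (\<Sum>e\<in>monomials n k. fscale (c e) (mv n e))"
    by (rule ext) (auto simp: c sum_fun_apply mv_def)
  also have "\<dots> \<in> fv.span (mv n ` monomials n k)"
    by (intro fv.span_sum fv.span_scale fv.span_base) auto
  finally show "v \<in> fv.span (mv n ` monomials n k)" .
next
  fix v :: "'a list \<Rightarrow> 'a" assume v: "v \<in> fv.span (mv n ` monomials n k)"
  have "fv.subspace (PRM n k :: ('a list \<Rightarrow> 'a) set)"
    unfolding fv.subspace_def
  proof (intro conjI ballI allI)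
    show "0 \<in> (PRM n k :: ('a list \<Rightarrow> 'a) set)" unfolding PRM_def
      by (auto intro!: exI[of _ "\<lambda>_. 0"])
  next
    fix x y :: "'a list \<Rightarrow> 'a" assume "x \<in> PRM n k" "y \<in> PRM n k"
    then obtain c d where
      c: "\<forall>p. x p = (if p \<in> proj_points n then (\<Sum>e\<in>monomials n k. c e * mon_eval e n p) else 0)" and
      d: "\<forall>p. y p = (if p \<in> proj_points n then (\<Sum>e\<in>monomials n k. d e * mon_eval e n p) else 0)"
      unfolding PRM_def by blast
    show "x + y \<in> PRM n k" unfolding PRM_def
      by (auto intro!: exI[of _ "\<lambda>e. c e + d e"] simp: c d algebra_simps sum.distrib)
  next
    fix a :: 'a and x :: "'a list \<Rightarrow> 'a" assume "x \<in> PRM n k"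
    then obtain c where
      c: "\<forall>p. x p = (if p \<in> proj_points n then (\<Sum>e\<in>monomials n k. c e * mon_eval e n p) else 0)"
      unfolding PRM_def by blast
    show "fscale a x \<in> PRM n k" unfolding PRM_def
      by (auto intro!: exI[of _ "\<lambda>e. a * c e"] simp: c sum_distrib_left mult_ac)
  qed
  moreover have "mv n ` monomials n k \<subseteq> (PRM n k :: ('a list \<Rightarrow> 'a) set)"
  proof
    fix v :: "'a list \<Rightarrow> 'a" assume "v \<in> mv n ` monomials n k"
    then obtain e where e: "e \<in> monomials n k" "v = mv n e" by auto
    show "v \<in> PRM n k" unfolding PRM_def
    proof (intro CollectI exI[of _ "\<lambda>e'. if e' = e then 1 else 0"] allI)
      fix p show "v p = (if p \<in> proj_points n then (\<Sum>e'\<in>monomials n k. (if e' = e then 1 else 0) * mon_eval e' n p) else 0)"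
      proof -
        have "(\<Sum>e'\<in>monomials n k. (if e' = e then 1 else 0) * mon_eval e' n p)
            = (\<Sum>e'\<in>monomials n k. if e' = e then mon_eval e' n p else (0::'a))"
          by (rule sum.cong) auto
        also have "\<dots> = mon_eval e n p" using e(1) finite_monomials by (simp add: sum.delta)
        finally show ?thesis using e(2) by (simp add: mv_def)
      qed
    qed
  qed
  ultimately show "v \<in> PRM n k" using fv.span_minimal v by blast
qed

lemma span_mv_VP: "fv.span (mv n ` X) \<subseteq> VP n"
  by (rule fv.span_minimal) (auto simp: mv_VP subspace_VP)

lemma PRM_VP: "(PRM n k :: ('a::{field,finite} list \<Rightarrow> 'a) set) \<subseteq> VP n"
  using span_mv_VP PRM_span by metis

definition delta :: "'a list \<Rightarrow> 'a list \<Rightarrow> 'b::field" where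
  "delta p = (\<lambda>x. if x = p then 1 else 0)"

lemma VP_span_delta:
  "VP n \<subseteq> fv.span (delta ` (proj_points n :: ('a::{field,finite}) list set) :: ('a list \<Rightarrow> 'a) set)"
proof
  fix u :: "'a list \<Rightarrow> 'a" assume u: "u \<in> VP n"
  have "u = (\<Sum>p\<in>proj_points n. fscale (u p) (delta p))"
  proof
    fix x show "u x = (\<Sum>p\<in>proj_points n. fscale (u p) (delta p)) x"
      using u by (auto simp: sum_fun_apply delta_def VP_def if_distrib cong: if_cong)
  qed
  also have "\<dots> \<in> fv.span (delta ` proj_points n)"
    by (intro fv.span_sum fv.span_scale fv.span_base) auto
  finally show "u \<in> fv.span (delta ` proj_points n)" .
qed


lemma mv_eq_on: "p \<in> proj_points n \<Longrightarrow> mv n e p = mon_eval e n p"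
  by (simp add: mv_def)

lemma mv_inj_indep:
  fixes B :: "(nat \<Rightarrow> nat) set"
  assumes m: "m = card (UNIV::'a::{field,finite} set) - 1" and w: "0 < w" "w < m"
    and B: "B \<subseteq> BW m n w"
  shows "inj_on (mv n :: _ \<Rightarrow> 'a list \<Rightarrow> 'a) B \<and> fv.independent (mv n ` B :: ('a list \<Rightarrow> 'a) set)"
proof
  have fB: "finite B" using finite_subset[OF B finite_BW] .
  have Bp: "\<forall>b\<in>B. (\<forall>i>n. b i = 0) \<and> (\<forall>i\<le>n. b i \<le> m) \<and> tot n b mod m = w"
    using B by (auto simp: BW_def)
  show inj: "inj_on (mv n :: _ \<Rightarrow> 'a list \<Rightarrow> 'a) B"
  proof (rule inj_onI, rule ccontr)
    fix b1 b2 assume b: "b1 \<in> B" "b2 \<in> B" "(mv n b1 :: 'a list \<Rightarrow> 'a) = mv n b2" "b1 \<noteq> b2"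
    define cf :: "(nat \<Rightarrow> nat) \<Rightarrow> 'a" where "cf b = (if b = b1 then 1 else if b = b2 then -1 else 0)" for b
    have "\<forall>b\<in>{b1,b2}. cf b = 0"
    proof (rule proj_indep[where w=w])
      show "finite {b1, b2}" by simp
      show "\<forall>b\<in>{b1, b2}. (\<forall>i>n. b i = 0) \<and> (\<forall>i\<le>n. b i \<le> card (UNIV::'a set) - 1) \<and>
          tot n b mod (card (UNIV::'a set) - 1) = w" using Bp b m by auto
      show "0 < w" "w < card (UNIV::'a set) - 1" using w m by auto
      show "\<forall>p\<in>proj_points n. (\<Sum>b\<in>{b1, b2}. cf b * mon_eval b n p) = 0"
      proof
        fix p :: "'a list" assume p: "p \<in> proj_points n"
        have "mon_eval b1 n p = mon_eval b2 n p" using b(3) mv_eq_on[OF p] by metis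
        thus "(\<Sum>b\<in>{b1, b2}. cf b * mon_eval b n p) = 0" using b(4) by (simp add: cf_def)
      qed
    qed
    thus False by (simp add: cf_def)
  qed
  show "fv.independent (mv n ` B :: ('a list \<Rightarrow> 'a) set)"
  proof
    assume "fv.dependent (mv n ` B :: ('a list \<Rightarrow> 'a) set)"
    then obtain u where u: "\<exists>v\<in>mv n ` B. u v \<noteq> 0" "(\<Sum>v\<in>mv n ` B. fscale (u v) v) = (0 :: 'a list \<Rightarrow> 'a)"
      using fv.dependent_finite[of "mv n ` B"] fB by blast
    have z: "(\<Sum>b\<in>B. fscale (u (mv n b)) (mv n b)) = (0 :: 'a list \<Rightarrow> 'a)"
      using u(2) by (simp add: sum.reindex[OF inj])
    have "\<forall>b\<in>B. u (mv n b) = 0"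
    proof (rule proj_indep[where w=w])
      show "finite B" by fact
      show "\<forall>b\<in>B. (\<forall>i>n. b i = 0) \<and> (\<forall>i\<le>n. b i \<le> card (UNIV::'a set) - 1) \<and>
          tot n b mod (card (UNIV::'a set) - 1) = w" using Bp m by auto
      show "0 < w" "w < card (UNIV::'a set) - 1" using w m by auto
      show "\<forall>p\<in>proj_points n. (\<Sum>b\<in>B. u (mv n b) * mon_eval b n p) = 0"
      proof
        fix p :: "'a list" assume p: "p \<in> proj_points n"
        have "(\<Sum>b\<in>B. fscale (u (mv n b)) (mv n b)) p = 0" using z by simp
        thus "(\<Sum>b\<in>B. u (mv n b) * mon_eval b n p) = 0"
          by (simp add: sum_fun_apply mv_eq_on[OF p])
      qed
    qed
    thus False using u(1) by auto
  qed
qed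

lemma VP_spanned:
  assumes m: "m = card (UNIV::'a::{field,finite} set) - 1" and w: "0 < w" "w < m"
  shows "(VP n :: ('a list \<Rightarrow> 'a) set) \<subseteq> fv.span (mv n ` BW m n w)"
proof
  let ?B = "mv n ` BW m n w :: ('a list \<Rightarrow> 'a) set"
  from mv_inj_indep[OF m w order_refl] have inj: "inj_on (mv n :: _ \<Rightarrow> 'a list \<Rightarrow> 'a) (BW m n w)"
    and ind: "fv.independent ?B" by auto
  have cB: "card ?B = card (BW m n w)" using card_image[OF inj] .
  have fB: "finite ?B" using finite_BW by simp
  fix u :: "'a list \<Rightarrow> 'a" assume u: "u \<in> VP n"
  show "u \<in> fv.span ?B"
  proof (rule ccontr)
    assume nu: "u \<notin> fv.span ?B"
    hence ind2: "fv.independent (insert u ?B)" using fv.independent_insertI ind by blast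
    have "insert u ?B \<subseteq> fv.span (delta ` (proj_points n :: 'a list set))"
      using u VP_span_delta[of n] span_mv_VP[of n "BW m n w"] fv.span_superset[of ?B] by blast
    from fv.independent_span_bound[OF _ ind2 this]
    have "card (insert u ?B) \<le> card (delta ` (proj_points n :: 'a list set) :: ('a list \<Rightarrow> 'a) set)" by simp
    also have "\<dots> \<le> card (proj_points n :: 'a list set)" by (rule card_image_le) simp
    also have "\<dots> \<le> card (BW m n w)" by (rule card_BW_ge[OF w m])
    finally have "card (insert u ?B) \<le> card (BW m n w)" .
    moreover have "u \<notin> ?B" using nu fv.span_superset[of ?B] by blast
    ultimately show False using fB cB by simp
  qed
qed

lemma VP_expand:
  assumes m: "m = card (UNIV::'a::{field,finite} set) - 1" and w: "0 < w" "w < m"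
    and u: "(u :: 'a list \<Rightarrow> 'a) \<in> VP n"
  shows "\<exists>c. u = (\<Sum>b\<in>BW m n w. fscale (c b) (mv n b))"
proof -
  from mv_inj_indep[OF m w order_refl] have inj: "inj_on (mv n :: _ \<Rightarrow> 'a list \<Rightarrow> 'a) (BW m n w)" by auto
  have "u \<in> fv.span (mv n ` BW m n w)" using VP_spanned[OF m w] u by blast
  moreover have "fv.span (mv n ` BW m n w) = range (\<lambda>cu. \<Sum>v\<in>mv n ` BW m n w. fscale (cu v) (v :: 'a list \<Rightarrow> 'a))"
    using fv.span_finite[of "mv n ` BW m n w"] finite_BW by simp
  ultimately obtain cu where "u = (\<Sum>v\<in>mv n ` BW m n w. fscale (cu v) v)"
    by auto
  hence "u = (\<Sum>b\<in>BW m n w. fscale (cu (mv n b)) (mv n b))"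
    by (simp add: sum.reindex[OF inj])
  thus ?thesis by (intro exI[of _ "\<lambda>b. cu (mv n b)"])
qed

definition ip :: "nat \<Rightarrow> ('a::field list \<Rightarrow> 'a) \<Rightarrow> ('a list \<Rightarrow> 'a) \<Rightarrow> 'a" where
  "ip n u v = (\<Sum>p\<in>proj_points n. u p * v p)"

lemma ip_mv: "ip n (mv n a) (mv n b :: 'a::{field,finite} list \<Rightarrow> 'a) = T n (\<lambda>i. a i + b i)"
  unfolding ip_def T_def mv_def mon_eval_def
  by (intro sum.cong refl) (simp add: power_add prod.distrib)

lemma ip_sum_left:
  "finite B \<Longrightarrow> ip n (\<Sum>b\<in>B. fscale (c b) (f b)) v = (\<Sum>b\<in>B. c b * ip n (f b) v)"
  unfolding ip_def by (simp add: sum_fun_apply sum_distrib_right sum_distrib_left mult_ac sum.swap[of _ B])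

lemma ip_comm: "ip n u v = ip n v u" unfolding ip_def by (simp add: mult.commute)


definition cmpl :: "nat \<Rightarrow> nat \<Rightarrow> (nat \<Rightarrow> nat) \<Rightarrow> nat \<Rightarrow> nat" where
  "cmpl m n b = (\<lambda>i. if i \<le> n then m - b i else 0)"

lemma tot_add: "tot n (\<lambda>i. a i + b i) = tot n a + tot n b"
  by (simp add: tot_def sum.distrib)

lemma tot_cmpl:
  assumes "\<forall>i\<le>n. b i \<le> m"
  shows "tot n (cmpl m n b) + tot n b = Suc n * m"
proof -
  have "tot n (cmpl m n b) + tot n b = (\<Sum>i\<le>n. (m - b i) + b i)"
    by (simp add: tot_def cmpl_def sum.distrib)
  also have "\<dots> = (\<Sum>i\<le>n. m)" using assms by (intro sum.cong) auto
  finally show ?thesis by simp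
qed

lemma pair_T:
  fixes b b0 :: "nat \<Rightarrow> nat"
  assumes m: "m = card (UNIV::'a::{field,finite} set) - 1" and w: "0 < w" "w < m"
    and b: "b \<in> BW m n w" and b0: "b0 \<in> BW m n w"
    and T: "(T n (\<lambda>i. b i + cmpl m n b0 i) :: 'a) \<noteq> 0"
  shows "b = b0 \<or> tot n b0 < tot n b"
proof -
  let ?c = "\<lambda>i. b i + cmpl m n b0 i"
  have bb: "\<forall>i\<le>n. b0 i \<le> m" "\<forall>i>n. b i = 0" "\<forall>i>n. b0 i = 0" "\<forall>i\<le>n. b i \<le> m"
    "tot n b mod m = w" "tot n b0 mod m = w"
    using b b0 by (auto simp: BW_def)
  have tc: "tot n ?c + tot n b0 = tot n b + Suc n * m"
    using tot_cmpl[OF bb(1)] tot_add[of n b "cmpl m n b0"] by simp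
  have "m dvd tot n ?c"
  proof -
    have "int (tot n ?c) = int (tot n b) - int (tot n b0) + int (Suc n * m)" using tc by linarith
    moreover have "int m dvd int (tot n b) - int (tot n b0)"
      using bb(5,6) by (metis mod_eq_dvd_iff of_nat_mod)
    ultimately have "int m dvd int (tot n ?c)" by simp
    thus ?thesis by simp
  qed
  moreover have "tot n ?c > 0"
  proof -
    have "tot n b > 0" using bb(5) w by (metis gr0I mod_0 less_irrefl)
    thus ?thesis using tot_add[of n b "cmpl m n b0"] by simp
  qed
  ultimately have Tc: "(T n ?c :: 'a) = - (\<Prod>i\<le>n. S (?c i))"
    using T_weight0[of n ?c] m by simp
  hence "(\<Prod>i\<le>n. (S (?c i) :: 'a)) \<noteq> 0" using T by simp
  from prod_S_ne0[OF this] have pos: "\<forall>i\<le>n. ?c i > 0 \<and> m dvd ?c i" using m by simp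
  have ge: "\<forall>i\<le>n. b0 i \<le> b i"
  proof (intro allI impI)
    fix i assume i: "i \<le> n"
    show "b0 i \<le> b i"
    proof (rule ccontr)
      assume "\<not> b0 i \<le> b i"
      hence lt: "b i < b0 i" by simp
      have "?c i = b i + (m - b0 i)" using i by (simp add: cmpl_def)
      hence "?c i < m" using lt i bb(1) by auto
      moreover have "?c i > 0" "m dvd ?c i" using pos i by auto
      ultimately show False by (metis dvd_imp_le not_less)
    qed
  qed
  show ?thesis
  proof (cases "b = b0")
    case False
    then obtain i where i: "b i \<noteq> b0 i" by auto
    hence "i \<le> n" using bb by (metis not_le)
    hence "b0 i < b i" using ge i by (metis le_neq_implies_less)
    hence "(\<Sum>j\<le>n. b0 j) < (\<Sum>j\<le>n. b j)"
      using ge \<open>i \<le> n\<close> by (intro sum_strict_mono_ex1) auto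
    thus ?thesis by (simp add: tot_def)
  qed simp
qed

lemma self_T:
  fixes b0 :: "nat \<Rightarrow> nat"
  assumes m: "m = card (UNIV::'a::{field,finite} set) - 1" and mpos: "0 < m"
    and b0: "\<forall>i\<le>n. b0 i \<le> m"
  shows "(T n (\<lambda>i. b0 i + cmpl m n b0 i) :: 'a) \<noteq> 0"
proof -
  let ?c = "\<lambda>i. b0 i + cmpl m n b0 i"
  have ci: "\<forall>i\<le>n. ?c i = m" using b0 by (simp add: cmpl_def)
  have "tot n ?c = (\<Sum>i\<le>n. m)" unfolding tot_def by (rule sum.cong) (use ci in auto)
  hence tt: "tot n ?c = Suc n * m" by simp
  have d: "(card (UNIV::'a set) - 1) dvd tot n ?c" using tt m by simp
  have p: "tot n ?c > 0" using tt mpos by simp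
  have "(T n ?c :: 'a) = - (\<Prod>i\<le>n. S (?c i))"
    using T_weight0[OF d p] .
  also have "\<dots> = - (\<Prod>i\<le>n. (-1::'a))"
    using ci S_dvd[where 'a='a, of m] m mpos by (intro arg_cong[where f=uminus] prod.cong) auto
  finally show ?thesis by simp
qed

lemma top_vanish:
  fixes c :: "(nat \<Rightarrow> nat) \<Rightarrow> 'a::{field,finite}"
  assumes m: "m = card (UNIV::'a set) - 1" and w: "0 < w" "w < m"
    and u: "u = (\<Sum>b\<in>BW m n w. fscale (c b) (mv n b))"
    and orth: "\<forall>b\<in>BW m n w. thr < tot n b \<longrightarrow> ip n u (mv n (cmpl m n b)) = 0"
  shows "\<forall>b\<in>BW m n w. thr < tot n b \<longrightarrow> c b = 0"
proof (rule ccontr)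
  assume H: "\<not> (\<forall>b\<in>BW m n w. thr < tot n b \<longrightarrow> c b = 0)"
  define X where "X = {b\<in>BW m n w. thr < tot n b \<and> c b \<noteq> 0}"
  have Xne: "X \<noteq> {}" using H by (auto simp: X_def)
  have fX: "finite X" using finite_BW unfolding X_def by simp
  define M where "M = Max (tot n ` X)"
  have "M \<in> tot n ` X" unfolding M_def using fX Xne by (intro Max_in) auto
  then obtain b0 where b0: "b0 \<in> X" "tot n b0 = M" by auto
  have maxi: "tot n b \<le> tot n b0" if "b \<in> X" for b
    using Max_ge[of "tot n ` X"] fX that b0(2) unfolding M_def by auto
  have b0B: "b0 \<in> BW m n w" and b0thr: "thr < tot n b0" and cb0: "c b0 \<noteq> 0"
    using b0(1) by (auto simp: X_def)
  have ipv: "ip n u (mv n (cmpl m n b0)) = (\<Sum>b\<in>BW m n w. c b * T n (\<lambda>i. b i + cmpl m n b0 i))"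
    unfolding u by (simp add: ip_sum_left finite_BW ip_mv)
  have zero: "c b * (T n (\<lambda>i. b i + cmpl m n b0 i) :: 'a) = 0" if "b \<in> BW m n w" "b \<noteq> b0" for b
  proof (rule ccontr)
    assume nz: "c b * (T n (\<lambda>i. b i + cmpl m n b0 i) :: 'a) \<noteq> 0"
    hence "tot n b0 < tot n b" using pair_T[OF m w that(1) b0B] that(2) by auto
    moreover have "b \<in> X" using nz that(1) b0thr \<open>tot n b0 < tot n b\<close> by (auto simp: X_def)
    ultimately show False using maxi by fastforce
  qed
  have "ip n u (mv n (cmpl m n b0)) = c b0 * T n (\<lambda>i. b0 i + cmpl m n b0 i)"
  proof -
    have "(\<Sum>b\<in>BW m n w - {b0}. c b * (T n (\<lambda>i. b i + cmpl m n b0 i) :: 'a)) = 0"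
      by (rule sum.neutral) (use zero in blast)
    thus ?thesis unfolding ipv using b0B finite_BW by (subst sum.remove[of _ b0]) auto
  qed
  moreover have "(T n (\<lambda>i. b0 i + cmpl m n b0 i) :: 'a) \<noteq> 0"
    using self_T[OF m] w b0B by (auto simp: BW_def)
  ultimately have "ip n u (mv n (cmpl m n b0)) \<noteq> 0" using cb0 by simp
  thus False using orth b0B b0thr by blast
qed

lemma mv_in_PRM:
  fixes b :: "nat \<Rightarrow> nat"
  assumes m: "m = card (UNIV::'a::{field,finite} set) - 1"
    and supp: "\<forall>i>n. b i = 0" and pos: "tot n b > 0" and le: "tot n b \<le> d"
    and dv: "m dvd (d - tot n b)"
  shows "(mv n b :: 'a list \<Rightarrow> 'a) \<in> PRM n d"
proof -
  obtain i where i: "i \<le> n" "b i > 0"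
  proof -
    have "tot n b \<noteq> 0" using pos by simp
    hence "\<exists>i\<in>{..n}. b i \<noteq> 0" unfolding tot_def by (simp add: sum_eq_0_iff)
    thus ?thesis using that by auto
  qed
  define b' where "b' = b(i := b i + (d - tot n b))"
  have "(\<Sum>j\<le>n. b' j) = (\<Sum>j\<le>n. b j + (if j = i then d - tot n b else 0))"
    by (intro sum.cong) (auto simp: b'_def)
  also have "\<dots> = tot n b + (d - tot n b)" using i by (simp add: sum.distrib tot_def)
  finally have "b' \<in> monomials n d" using supp le i by (auto simp: monomials_def b'_def)
  moreover have "(mv n b' :: 'a list \<Rightarrow> 'a) = mv n b"
  proof
    fix p :: "'a list"
    have "mon_eval b' n p = mon_eval b n p" unfolding mon_eval_def
    proof (intro prod.cong refl)
      fix j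
      show "p ! j ^ b' j = p ! j ^ b j"
      proof (cases "j = i")
        case True
        show ?thesis
        proof (cases "p ! j = 0")
          case True thus ?thesis using i \<open>j = i\<close> by (simp add: b'_def power_0_left)
        next
          case False
          obtain r where r: "d - tot n b = m * r" using dv by blast
          have "p ! j ^ (d - tot n b) = 1"
            using fermat_ff[OF False] m r by (simp add: power_mult)
          thus ?thesis using \<open>j = i\<close> by (simp add: b'_def power_add)
        qed
      qed (simp add: b'_def)
    qed
    thus "mv n b' p = mv n b p" by (simp add: mv_def)
  qed
  ultimately show ?thesis unfolding PRM_span by (metis fv.span_base imageI)
qed


lemma size_count_sum: "size M = (\<Sum>x\<in>set_mset M. count M x)"
  by (simp add: size_multiset_overloaded_eq)

lemma card_monomials: "card (monomials n l) = (n + l) choose l"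
proof -
  have eq: "monomials n l = count ` multisets_of_size {..n} l"
  proof (intro set_eqI iffI)
    fix e assume e: "e \<in> monomials n l"
    have pos: "x \<le> n" if "0 < e x" for x
    proof (rule ccontr)
      assume "\<not> x \<le> n" hence "x > n" by simp
      thus False using e that by (simp add: monomials_def)
    qed
    have fin: "finite {x. e x > 0}"
      by (rule finite_subset[of _ "{..n}"]) (use pos in auto)
    define M where "M = Abs_multiset e"
    have cM: "count M = e" unfolding M_def by (rule count_Abs_multiset[OF fin])
    have sM: "set_mset M = {x. e x > 0}" using cM by (auto simp: set_mset_def)
    have sub: "set_mset M \<subseteq> {..n}" using sM pos by auto
    have "size M = (\<Sum>x\<in>{..n}. e x)"
      unfolding size_count_sum cM using sub sM by (intro sum.mono_neutral_left) auto
    hence "M \<in> multisets_of_size {..n} l" using sub e by (simp add: multisets_of_size_def monomials_def)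
    thus "e \<in> count ` multisets_of_size {..n} l" using cM by blast
  next
    fix e assume "e \<in> count ` multisets_of_size {..n} l"
    then obtain M where M: "set_mset M \<subseteq> {..n}" "size M = l" "e = count M"
      by (auto simp: multisets_of_size_def)
    have "(\<Sum>i\<le>n. count M i) = size M"
      unfolding size_count_sum using M(1) by (intro sum.mono_neutral_right) (auto simp: count_eq_zero_iff)
    moreover have "\<forall>i>n. count M i = 0" using M(1) by (auto simp: count_eq_zero_iff)
    ultimately show "e \<in> monomials n l" using M by (simp add: monomials_def)
  qed
  have inj: "inj_on count (multisets_of_size {..n} l)"
    by (rule inj_onI) (simp add: multiset_eq_iff)
  have "card (monomials n l) = card (multisets_of_size {..n} l)"
    unfolding eq by (rule card_image[OF inj])
  also have "\<dots> = (n + l) choose l" by (simp add: card_multisets_of_size)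
  finally show ?thesis .
qed

lemma cong_close:
  fixes a b m :: nat
  assumes "a mod m = b mod m" "a < b + m" "b < a + m"
  shows "a = b"
proof (rule ccontr)
  assume ne: "a \<noteq> b"
  have "int m dvd int a - int b" using assms(1) by (metis mod_eq_dvd_iff of_nat_mod)
  hence d: "int m dvd \<bar>int a - int b\<bar>" by simp
  have "0 < \<bar>int a - int b\<bar>" using ne by simp
  from zdvd_imp_le[OF d this] have "int m \<le> \<bar>int a - int b\<bar>" .
  thus False using assms(2,3) by linarith
qed


lemma PRM_repr:
  assumes "(v :: 'a::{field,finite} list \<Rightarrow> 'a) \<in> PRM n k"
  shows "\<exists>c. v = (\<Sum>e\<in>monomials n k. fscale (c e) (mv n e))"
proof -
  obtain c where c: "\<forall>p. v p = (if p \<in> proj_points n then (\<Sum>e\<in>monomials n k. c e * mon_eval e n p) else 0)"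
    using assms unfolding PRM_def by blast
  have "v = (\<Sum>e\<in>monomials n k. fscale (c e) (mv n e))"
    by (rule ext) (auto simp: c sum_fun_apply mv_def)
  thus ?thesis by blast
qed

lemma sum_in_PRM:
  assumes "finite A" "\<And>a. a \<in> A \<Longrightarrow> c a = 0 \<or> (f a :: 'a::{field,finite} list \<Rightarrow> 'a) \<in> PRM n k"
  shows "(\<Sum>a\<in>A. fscale (c a) (f a)) \<in> PRM n k"
  unfolding PRM_span
proof (rule fv.span_sum)
  fix a assume a: "a \<in> A"
  show "fscale (c a) (f a) \<in> fv.span (mv n ` monomials n k)"
  proof (cases "c a = 0")
    case True
    have z: "fscale (c a) (f a) = 0" using True by (simp add: fun_eq_iff)
    show ?thesis unfolding z by (rule fv.span_zero)
  next
    case False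
    hence "f a \<in> fv.span (mv n ` monomials n k)" using assms(2)[OF a] PRM_span by blast
    thus ?thesis by (rule fv.span_scale)
  qed
qed

lemma dual_VP: "u \<in> dual_code n C \<Longrightarrow> u \<in> VP n"
  by (simp add: dual_code_def VP_def)

lemma dual_ip: "u \<in> dual_code n C \<Longrightarrow> v \<in> C \<Longrightarrow> ip n u v = 0"
  by (simp add: dual_code_def ip_def)

lemma monomials_tot: "e \<in> monomials n d \<Longrightarrow> tot n e = d"
  by (simp add: monomials_def tot_def)

lemma monomials_le: "e \<in> monomials n d \<Longrightarrow> i \<le> n \<Longrightarrow> e i \<le> d"
  unfolding monomials_def by (auto intro: order.trans[OF member_le_sum[of i "{..n}" e]] simp: atMost_iff)

locale hctx =
  fixes n k l m :: nat and ty :: "'a::{field,finite} itself"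
  assumes m: "m = card (UNIV::'a set) - 1"
    and n1: "1 \<le> n" and lpos: "0 < l" and lm: "l < m" and l2: "m < 2 * l" and kl: "k + l = n * m"

context hctx
begin

lemma mpos: "0 < m" using lpos lm by simp

lemma k_mod: "k mod m = m - l"
proof -
  have "n * m = (n - 1) * m + m" using n1 by (cases n) auto
  hence kk: "k = (m - l) + (n - 1) * m" using kl lm by linarith
  have "k mod m = (m - l) mod m" by (subst kk) (rule mod_mult_self1)
  thus ?thesis using lm lpos by simp
qed

lemma T_kl_zero:
  assumes a: "a \<in> monomials n k" and b: "b \<in> monomials n l"
  shows "(T n (\<lambda>i. b i + a i) :: 'a) = 0"
proof -
  let ?c = "\<lambda>i. b i + a i"
  have tc: "tot n ?c = n * m" using tot_add[of n b a] monomials_tot[OF a] monomials_tot[OF b] kl by simp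
  have d: "(card (UNIV::'a set) - 1) dvd tot n ?c" using tc m by simp
  have p: "0 < tot n ?c" using tc n1 mpos by simp
  have T: "(T n ?c :: 'a) = - (\<Prod>i\<le>n. S (?c i))" using T_weight0[OF d p] .
  have "(\<Prod>i\<le>n. (S (?c i) :: 'a)) = 0"
  proof (rule ccontr)
    assume "(\<Prod>i\<le>n. (S (?c i) :: 'a)) \<noteq> 0"
    from prod_S_ne0[OF this] have H: "\<forall>i\<le>n. m \<le> ?c i"
      using m by (auto intro: dvd_imp_le)
    have "(\<Sum>i\<le>n. m) \<le> (\<Sum>i\<le>n. ?c i)" by (rule sum_mono) (use H in auto)
    hence "Suc n * m \<le> n * m" using tc by (simp add: tot_def)
    thus False using mpos by simp
  qed
  thus ?thesis using T by simp
qed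

lemma orth:
  assumes u: "u \<in> (PRM n k :: ('a list \<Rightarrow> 'a) set)" and v: "v \<in> (PRM n l :: ('a list \<Rightarrow> 'a) set)"
  shows "ip n u v = 0"
proof -
  obtain cu where cu: "u = (\<Sum>a\<in>monomials n k. fscale (cu a) (mv n a))" using PRM_repr[OF u] by blast
  obtain cv where cv: "v = (\<Sum>b\<in>monomials n l. fscale (cv b) (mv n b))" using PRM_repr[OF v] by blast
  have "ip n u v = (\<Sum>a\<in>monomials n k. cu a * ip n (mv n a) v)"
    unfolding cu by (simp add: ip_sum_left finite_monomials)
  also have "\<dots> = (\<Sum>a\<in>monomials n k. cu a * ip n v (mv n a))"
    by (intro sum.cong refl) (subst ip_comm, rule refl)
  also have "\<dots> = (\<Sum>a\<in>monomials n k. cu a * (\<Sum>b\<in>monomials n l. cv b * T n (\<lambda>i. b i + a i)))"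
    unfolding cv by (simp add: ip_sum_left finite_monomials ip_mv)
  also have "\<dots> = 0" using T_kl_zero by (simp add: sum.neutral)
  finally show ?thesis .
qed

end


context hctx
begin

lemma dual_l_sub_k:
  assumes u: "u \<in> dual_code n (PRM n l :: ('a list \<Rightarrow> 'a) set)"
  shows "u \<in> (PRM n k :: ('a list \<Rightarrow> 'a) set)"
proof -
  let ?w = "m - l"
  have w1: "0 < ?w" and w2: "?w < m" using lm lpos by auto
  have uVP: "u \<in> VP n" using dual_VP[OF u] .
  obtain c where ue: "u = (\<Sum>b\<in>BW m n ?w. fscale (c b) (mv n b))"
    using VP_expand[OF m w1 w2 uVP] by blast
  have van: "\<forall>b\<in>BW m n ?w. k < tot n b \<longrightarrow> c b = 0"
  proof (rule top_vanish[OF m w1 w2 ue])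
    show "\<forall>b\<in>BW m n ?w. k < tot n b \<longrightarrow> ip n u (mv n (cmpl m n b)) = 0"
    proof (intro ballI impI)
      fix b assume b: "b \<in> BW m n ?w" and kb: "k < tot n b"
      have bb: "\<forall>i>n. b i = 0" "\<forall>i\<le>n. b i \<le> m" "tot n b mod m = m - l"
        using b by (auto simp: BW_def)
      have tc: "tot n (cmpl m n b) + tot n b = Suc n * m" using tot_cmpl[OF bb(2)] .
      have "(Suc n * m - l) mod m = m - l"
      proof -
        have "Suc n * m - l = (m - l) + n * m" using lm by simp
        hence "(Suc n * m - l) mod m = (m - l) mod m" by (metis mod_mult_self1)
        thus ?thesis using lm lpos by simp
      qed
      hence "tot n b = Suc n * m - l"
        using cong_close[of "tot n b" m "Suc n * m - l"] bb(3) tc kl kb lm by fastforce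
      hence tcl: "tot n (cmpl m n b) = l" using tc lm by simp
      have "(mv n (cmpl m n b) :: 'a list \<Rightarrow> 'a) \<in> PRM n l"
        by (rule mv_in_PRM[OF m]) (simp_all add: tcl lpos cmpl_def[of m n b, symmetric], simp add: cmpl_def)
      thus "ip n u (mv n (cmpl m n b)) = 0" by (rule dual_ip[OF u])
    qed
  qed
  show ?thesis unfolding ue
  proof (rule sum_in_PRM[OF finite_BW])
    fix b assume b: "b \<in> BW m n ?w"
    show "c b = 0 \<or> (mv n b :: 'a list \<Rightarrow> 'a) \<in> PRM n k"
    proof (cases "k < tot n b")
      case True thus ?thesis using van b by blast
    next
      case False
      have bb: "\<forall>i>n. b i = 0" "tot n b mod m = m - l"
        using b by (auto simp: BW_def)
      have pos: "0 < tot n b"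
      proof (rule ccontr)
        assume "\<not> 0 < tot n b" hence "tot n b = 0" by simp
        thus False using bb(2) lm by simp
      qed
      have "k mod m = tot n b mod m" using bb(2) k_mod by simp
      hence dv: "m dvd k - tot n b" using False by (simp add: mod_eq_dvd_iff_nat)
      have "(mv n b :: 'a list \<Rightarrow> 'a) \<in> PRM n k"
        by (rule mv_in_PRM[OF m bb(1) pos _ dv]) (use False in simp)
      thus ?thesis ..
    qed
  qed
qed

lemma dual_k_sub_l:
  assumes u: "u \<in> dual_code n (PRM n k :: ('a list \<Rightarrow> 'a) set)"
  shows "u \<in> (PRM n l :: ('a list \<Rightarrow> 'a) set)"
proof -
  have w1: "0 < l" and w2: "l < m" using lm lpos by auto
  have uVP: "u \<in> VP n" using dual_VP[OF u] .
  obtain c where ue: "u = (\<Sum>b\<in>BW m n l. fscale (c b) (mv n b))"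
    using VP_expand[OF m w1 w2 uVP] by blast
  have van: "\<forall>b\<in>BW m n l. l < tot n b \<longrightarrow> c b = 0"
  proof (rule top_vanish[OF m w1 w2 ue])
    show "\<forall>b\<in>BW m n l. l < tot n b \<longrightarrow> ip n u (mv n (cmpl m n b)) = 0"
    proof (intro ballI impI)
      fix b assume b: "b \<in> BW m n l" and lb: "l < tot n b"
      have bb: "\<forall>i>n. b i = 0" "\<forall>i\<le>n. b i \<le> m" "tot n b mod m = l"
        using b by (auto simp: BW_def)
      have tc: "tot n (cmpl m n b) + tot n b = Suc n * m" using tot_cmpl[OF bb(2)] .
      define Q where "Q = tot n b div m"
      have tbQ: "tot n b = m * Q + l" unfolding Q_def
        using div_mult_mod_eq[of "tot n b" m] bb(3) by (simp add: mult.commute)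
      have Q1: "Q \<ge> 1" using tbQ lb by (cases Q) auto
      have mQ: "m * Q \<ge> m" using Q1 by simp
      have pos: "0 < tot n (cmpl m n b)"
      proof (rule ccontr)
        assume "\<not> 0 < tot n (cmpl m n b)"
        hence "tot n b = Suc n * m" using tc by simp
        hence "tot n b mod m = 0" by simp
        thus False using bb(3) lpos by simp
      qed
      have e: "Suc n * m = m + n * m" by simp
      have le: "tot n (cmpl m n b) \<le> k" using tc tbQ mQ kl e by linarith
      have "k - tot n (cmpl m n b) = m * Q - m" using tc tbQ kl mQ e by linarith
      also have "\<dots> = m * (Q - 1)" by (simp add: diff_mult_distrib2)
      finally have dv: "m dvd k - tot n (cmpl m n b)" by simp
      have "(mv n (cmpl m n b) :: 'a list \<Rightarrow> 'a) \<in> PRM n k"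
        by (rule mv_in_PRM[OF m _ pos le dv]) (auto simp: cmpl_def)
      thus "ip n u (mv n (cmpl m n b)) = 0" by (rule dual_ip[OF u])
    qed
  qed
  show ?thesis unfolding ue
  proof (rule sum_in_PRM[OF finite_BW])
    fix b assume b: "b \<in> BW m n l"
    show "c b = 0 \<or> (mv n b :: 'a list \<Rightarrow> 'a) \<in> PRM n l"
    proof (cases "l < tot n b")
      case True thus ?thesis using van b by blast
    next
      case False
      have bb: "\<forall>i>n. b i = 0" "tot n b mod m = l"
        using b by (auto simp: BW_def)
      have "l mod m = l" using lm by simp
      hence "tot n b = l" using cong_close[of "tot n b" m l] bb(2) False lm by fastforce
      hence "b \<in> monomials n l" using bb(1) by (simp add: monomials_def tot_def)
      hence "(mv n b :: 'a list \<Rightarrow> 'a) \<in> PRM n l"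
        unfolding PRM_span by (intro fv.span_base) blast
      thus ?thesis ..
    qed
  qed
qed

end


lemma subspace_dual: "fv.subspace (dual_code n (C :: ('a::field list \<Rightarrow> 'a) set))"
  unfolding fv.subspace_def dual_code_def
  by (auto simp: algebra_simps sum.distrib sum_distrib_left[symmetric])

context hctx
begin

definition Ef :: "nat \<Rightarrow> nat \<Rightarrow> nat" where
  "Ef t = (\<lambda>i. if i = n - 1 then t else if i = n then l - t else 0)"

definition EE :: "(nat \<Rightarrow> nat) set" where "EE = Ef ` {..2 * l - m}"

definition HH :: "(nat \<Rightarrow> nat) set" where "HH = monomials n l - EE"

lemma nn: "n - 1 \<noteq> n" using n1 by simp

lemma sum_two:
  assumes "\<forall>i. i \<noteq> n - 1 \<and> i \<noteq> n \<longrightarrow> f i = 0"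
  shows "(\<Sum>i\<le>n. f i) = f (n - 1) + (f n :: nat)"
proof -
  have "(\<Sum>i\<le>n. f i) = (\<Sum>i\<in>{n - 1, n}. f i)"
    by (rule sum.mono_neutral_right) (use assms in auto)
  thus ?thesis using nn by simp
qed

lemma Ef_mono: "t \<le> 2 * l - m \<Longrightarrow> Ef t \<in> monomials n l"
  unfolding monomials_def
proof (intro CollectI conjI allI impI)
  assume t: "t \<le> 2 * l - m"
  show "Ef t i = 0" if "i > n" for i using that by (simp add: Ef_def)
  have "(\<Sum>i\<le>n. Ef t i) = Ef t (n - 1) + Ef t n" by (rule sum_two) (simp add: Ef_def)
  also have "\<dots> = t + (l - t)" using nn by (simp add: Ef_def)
  also have "\<dots> = l" using t lm by simp
  finally show "(\<Sum>i\<le>n. Ef t i) = l" .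
qed

lemma EE_sub: "EE \<subseteq> monomials n l" unfolding EE_def using Ef_mono by auto

lemma Ef_inj: "inj_on Ef X"
proof (rule inj_onI)
  fix s t assume "Ef s = Ef t"
  hence "Ef s (n - 1) = Ef t (n - 1)" by simp
  thus "s = t" by (simp add: Ef_def)
qed

lemma card_EE: "card EE = 2 * l - m + 1"
  unfolding EE_def by (simp add: card_image[OF Ef_inj])

lemma T_ll:
  assumes a: "a \<in> monomials n l" and b: "b \<in> monomials n l"
  shows "(T n (\<lambda>i. a i + b i) :: 'a) = (if (\<lambda>i. a i + b i) = pat1 n (2 * l) then 1 else 0)
            - (if (\<lambda>i. a i + b i) = pat2 n (2 * l) m then 1 else 0)"
proof (rule T_two[OF m])
  show "m < 2 * l" using l2 .
  show "2 * l < 2 * m" using lm by simp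
  show "\<forall>i>n. a i + b i = 0" using a b by (simp add: monomials_def)
  show "tot n (\<lambda>i. a i + b i) = 2 * l" using tot_add[of n a b] monomials_tot[OF a] monomials_tot[OF b] by simp
qed

lemma pat2_at: "pat2 n s m i = (if i = n - 1 then s - m else if i = n then m else 0)"
  using n1 by (auto simp: pat2_def)

lemma claimA:
  assumes a: "a \<in> HH" and b: "b \<in> monomials n l"
  shows "(T n (\<lambda>i. a i + b i) :: 'a) = 0"
proof -
  have am: "a \<in> monomials n l" and ae: "a \<notin> EE" using a by (auto simp: HH_def)
  have asupp: "\<forall>i>n. a i = 0" using am by (simp add: monomials_def)
  have n1': "(\<lambda>i. a i + b i) \<noteq> pat1 n (2 * l)"
  proof
    assume eq: "(\<lambda>i. a i + b i) = pat1 n (2 * l)"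
    have "a n + b n = 2 * l" using fun_cong[OF eq, of n] by (simp add: pat1_def)
    moreover have "a n \<le> l" "b n \<le> l" using monomials_le[OF am] monomials_le[OF b] by auto
    ultimately have an: "a n = l" by simp
    have "a = Ef 0"
    proof
      fix i show "a i = Ef 0 i"
      proof (cases "i = n")
        case True thus ?thesis using an n1 by (simp add: Ef_def)
      next
        case False
        hence "a i + b i = 0" using fun_cong[OF eq, of i] by (simp add: pat1_def)
        thus ?thesis using False by (simp add: Ef_def)
      qed
    qed
    hence "a \<in> EE" unfolding EE_def by auto
    thus False using ae by simp
  qed
  have n2': "(\<lambda>i. a i + b i) \<noteq> pat2 n (2 * l) m"
  proof
    assume eq: "(\<lambda>i. a i + b i) = pat2 n (2 * l) m"
    have z: "\<forall>i. i \<noteq> n - 1 \<and> i \<noteq> n \<longrightarrow> a i = 0"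
    proof (intro allI impI)
      fix i assume i: "i \<noteq> n - 1 \<and> i \<noteq> n"
      have "a i + b i = pat2 n (2 * l) m i" using fun_cong[OF eq, of i] by simp
      also have "\<dots> = 0" using i by (simp add: pat2_at)
      finally show "a i = 0" by simp
    qed
    have t1: "a (n - 1) + b (n - 1) = 2 * l - m" using fun_cong[OF eq, of "n - 1"] by (simp add: pat2_at)
    have "l = a (n - 1) + a n" using monomials_tot[OF am] sum_two[OF z] by (simp add: tot_def)
    have "a = Ef (a (n - 1))"
    proof
      fix i show "a i = Ef (a (n - 1)) i"
      proof (cases "i = n - 1")
        case True thus ?thesis by (simp add: Ef_def)
      next
        case False
        show ?thesis
        proof (cases "i = n")
          case True
          have an: "a n = l - a (n - 1)" using \<open>l = a (n - 1) + a n\<close> by simp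
          show ?thesis using True False an by (simp add: Ef_def)
        next
          case False2: False
          thus ?thesis using False z by (simp add: Ef_def)
        qed
      qed
    qed
    moreover have "a (n - 1) \<le> 2 * l - m" using t1 by simp
    ultimately have "a \<in> EE" unfolding EE_def by blast
    thus False using ae by simp
  qed
  show ?thesis using T_ll[OF am b] n1' n2' by simp
qed

lemma Ef_at: "Ef t (n - 1) = t" "Ef t n = l - t" "i \<noteq> n - 1 \<Longrightarrow> i \<noteq> n \<Longrightarrow> Ef t i = 0"
  using nn by (auto simp: Ef_def)

lemma pat1_at: "pat1 n s (n - 1) = 0" "pat1 n s n = s" "i \<noteq> n \<Longrightarrow> pat1 n s i = 0"
  using nn by (auto simp: pat1_def)

lemma pat2_at': "pat2 n s m (n - 1) = s - m" "pat2 n s m n = m" "i \<noteq> n - 1 \<Longrightarrow> i \<noteq> n \<Longrightarrow> pat2 n s m i = 0"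
  using nn by (auto simp: pat2_at)

lemma fun_eq_3:
  assumes "f (n - 1) = g (n - 1)" "f n = g n" "\<And>i. i \<noteq> n - 1 \<Longrightarrow> i \<noteq> n \<Longrightarrow> f i = g i"
  shows "f = g"
proof
  fix i show "f i = g i" using assms by (cases "i = n - 1"; cases "i = n") auto
qed

lemma claimB1:
  assumes a: "a \<in> monomials n l" and s: "s \<le> 2 * l - m"
  shows "((\<lambda>i. a i + Ef s i) = pat1 n (2 * l)) \<longleftrightarrow> s = 0 \<and> a = Ef 0"
proof
  assume eq: "(\<lambda>i. a i + Ef s i) = pat1 n (2 * l)"
  have e: "a i + Ef s i = pat1 n (2 * l) i" for i using fun_cong[OF eq, of i] by simp
  have "a (n - 1) + s = 0" using e[of "n - 1"] by (simp add: Ef_at[simplified] pat1_at[simplified])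
  hence s0: "s = 0" and a1: "a (n - 1) = 0" by auto
  have "a = Ef 0"
  proof (rule fun_eq_3)
    show "a (n - 1) = Ef 0 (n - 1)" using a1 by (simp add: Ef_at[simplified])
    show "a n = Ef 0 n" using e[of n] s0 by (simp add: Ef_at[simplified] pat1_at[simplified])
    fix i assume "i \<noteq> n - 1" "i \<noteq> n"
    thus "a i = Ef 0 i" using e[of i] by (simp add: Ef_at[simplified] pat1_at[simplified])
  qed
  thus "s = 0 \<and> a = Ef 0" using s0 by simp
next
  assume h: "s = 0 \<and> a = Ef 0"
  show "(\<lambda>i. a i + Ef s i) = pat1 n (2 * l)"
  proof (rule fun_eq_3)
    show "a (n - 1) + Ef s (n - 1) = pat1 n (2 * l) (n - 1)" using h by (simp add: Ef_at[simplified] pat1_at[simplified])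
    show "a n + Ef s n = pat1 n (2 * l) n" using h by (simp add: Ef_at[simplified] pat1_at[simplified])
    fix i assume "i \<noteq> n - 1" "i \<noteq> n"
    thus "a i + Ef s i = pat1 n (2 * l) i" using h by (simp add: Ef_at[simplified] pat1_at[simplified])
  qed
qed

lemma claimB2:
  assumes a: "a \<in> monomials n l" and s: "s \<le> 2 * l - m"
  shows "((\<lambda>i. a i + Ef s i) = pat2 n (2 * l) m) \<longleftrightarrow> a = Ef (2 * l - m - s)"
proof
  assume eq: "(\<lambda>i. a i + Ef s i) = pat2 n (2 * l) m"
  have e: "a i + Ef s i = pat2 n (2 * l) m i" for i using fun_cong[OF eq, of i] by simp
  show "a = Ef (2 * l - m - s)"
  proof (rule fun_eq_3)
    show "a (n - 1) = Ef (2 * l - m - s) (n - 1)" using e[of "n - 1"] by (simp add: Ef_at[simplified] pat2_at'[simplified])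
    have "a n + (l - s) = m" using e[of n] by (simp add: Ef_at[simplified] pat2_at'[simplified])
    thus "a n = Ef (2 * l - m - s) n" using s lm l2 by (simp add: Ef_at[simplified])
    fix i assume "i \<noteq> n - 1" "i \<noteq> n"
    thus "a i = Ef (2 * l - m - s) i" using e[of i] by (simp add: Ef_at[simplified] pat2_at'[simplified])
  qed
next
  assume h: "a = Ef (2 * l - m - s)"
  show "(\<lambda>i. a i + Ef s i) = pat2 n (2 * l) m"
  proof (rule fun_eq_3)
    show "a (n - 1) + Ef s (n - 1) = pat2 n (2 * l) m (n - 1)" using h s by (simp add: Ef_at[simplified] pat2_at'[simplified])
    show "a n + Ef s n = pat2 n (2 * l) m n" using h s lm l2 by (simp add: Ef_at[simplified] pat2_at'[simplified])
    fix i assume "i \<noteq> n - 1" "i \<noteq> n"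
    thus "a i + Ef s i = pat2 n (2 * l) m i" using h by (simp add: Ef_at[simplified] pat2_at'[simplified])
  qed
qed

end


context hctx
begin

lemma Ef_eq_iff[simp]: "Ef x = Ef y \<longleftrightarrow> x = y"
  using inj_on_eq_iff[OF Ef_inj[of UNIV]] by simp

lemma ip_Ef:
  assumes s: "s \<le> 2 * l - m"
  shows "ip n (\<Sum>a\<in>monomials n l. fscale (c a) (mv n a)) (mv n (Ef s) :: 'a list \<Rightarrow> 'a)
       = (if s = 0 then c (Ef 0) else 0) - c (Ef (2 * l - m - s))"
proof -
  have E0: "Ef 0 \<in> monomials n l" by (rule Ef_mono) simp
  have E1: "Ef (2 * l - m - s) \<in> monomials n l" by (rule Ef_mono) simp
  have Es: "Ef s \<in> monomials n l" by (rule Ef_mono[OF s])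
  have "ip n (\<Sum>a\<in>monomials n l. fscale (c a) (mv n a)) (mv n (Ef s) :: 'a list \<Rightarrow> 'a)
      = (\<Sum>a\<in>monomials n l. c a * T n (\<lambda>i. a i + Ef s i))"
    by (simp add: ip_sum_left finite_monomials ip_mv)
  also have "\<dots> = (\<Sum>a\<in>monomials n l. (if s = 0 \<and> a = Ef 0 then c a else 0) - (if a = Ef (2 * l - m - s) then c a else 0))"
  proof (intro sum.cong refl)
    fix a assume a: "a \<in> monomials n l"
    show "c a * (T n (\<lambda>i. a i + Ef s i) :: 'a) = (if s = 0 \<and> a = Ef 0 then c a else 0) - (if a = Ef (2 * l - m - s) then c a else 0)"
      using T_ll[OF a Es] claimB1[OF a s] claimB2[OF a s] by (simp add: right_diff_distrib)
  qed
  also have "\<dots> = (if s = 0 then c (Ef 0) else 0) - c (Ef (2 * l - m - s))"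
    using E0 E1 finite_monomials by (simp add: sum_subtractf sum.delta)
  finally show ?thesis .
qed

lemma coeffs_EE_zero:
  assumes c: "\<forall>a'\<in>monomials n l. ip n (\<Sum>a\<in>monomials n l. fscale (c a) (mv n a)) (mv n a' :: 'a list \<Rightarrow> 'a) = 0"
  shows "\<forall>t\<le>2 * l - m. c (Ef t) = 0"
proof -
  have key: "(if s = 0 then c (Ef 0) else 0) - c (Ef (2 * l - m - s)) = 0" if s: "s \<le> 2 * l - m" for s
    using ip_Ef[OF s, of c] c Ef_mono[OF s] by simp
  have lt: "c (Ef t) = 0" if t: "t < 2 * l - m" for t
  proof -
    have e1: "2 * l - m - (2 * l - m - t) = t" using t by simp
    have e2: "2 * l - m - t \<noteq> 0" using t by simp
    have "2 * l - m - t \<le> 2 * l - m" by simp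
    from key[OF this] show ?thesis unfolding e1 using e2 by simp
  qed
  show ?thesis
  proof (intro allI impI)
    fix t assume t: "t \<le> 2 * l - m"
    show "c (Ef t) = 0"
    proof (cases "t < 2 * l - m")
      case True thus ?thesis by (rule lt)
    next
      case False
      hence tt: "t = 2 * l - m" using t by simp
      have "c (Ef 0) = 0" using lt[of 0] l2 by simp
      thus ?thesis using key[of 0] tt by simp
    qed
  qed
qed

lemma hull_eq: "hull_code n (PRM n k :: ('a list \<Rightarrow> 'a) set) = fv.span (mv n ` HH)"
proof (intro equalityI subsetI)
  fix u :: "'a list \<Rightarrow> 'a" assume u: "u \<in> hull_code n (PRM n k)"
  have uk: "u \<in> PRM n k" and ud: "u \<in> dual_code n (PRM n k)" using u by (auto simp: hull_code_def)
  have ul: "u \<in> PRM n l" by (rule dual_k_sub_l[OF ud])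
  obtain c where ue: "u = (\<Sum>a\<in>monomials n l. fscale (c a) (mv n a))" using PRM_repr[OF ul] by blast
  have "\<forall>a'\<in>monomials n l. ip n (\<Sum>a\<in>monomials n l. fscale (c a) (mv n a)) (mv n a' :: 'a list \<Rightarrow> 'a) = 0"
  proof
    fix a' assume "a' \<in> monomials n l"
    hence "(mv n a' :: 'a list \<Rightarrow> 'a) \<in> PRM n l" unfolding PRM_span by (intro fv.span_base) blast
    thus "ip n (\<Sum>a\<in>monomials n l. fscale (c a) (mv n a)) (mv n a') = 0"
      using orth[OF uk] ue by simp
  qed
  from coeffs_EE_zero[OF this] have cz: "\<forall>a\<in>EE. c a = 0" unfolding EE_def by auto
  have "u = (\<Sum>a\<in>HH. fscale (c a) (mv n a)) + (\<Sum>a\<in>EE. fscale (c a) (mv n a))"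
    unfolding ue HH_def using EE_sub finite_monomials
    by (subst sum.subset_diff[of EE]) auto
  also have "(\<Sum>a\<in>EE. fscale (c a) (mv n a)) = (0 :: 'a list \<Rightarrow> 'a)"
    using cz by (intro sum.neutral) (simp add: fun_eq_iff)
  finally have "u = (\<Sum>a\<in>HH. fscale (c a) (mv n a))" by (simp only: add_0_right)
  also have "\<dots> \<in> fv.span (mv n ` HH)"
    by (intro fv.span_sum fv.span_scale fv.span_base) auto
  finally show "u \<in> fv.span (mv n ` HH)" .
next
  fix u :: "'a list \<Rightarrow> 'a" assume u: "u \<in> fv.span (mv n ` HH)"
  have sub: "fv.subspace (hull_code n (PRM n k :: ('a list \<Rightarrow> 'a) set))"
    unfolding hull_code_def PRM_span by (intro fv.subspace_inter subspace_dual) simp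
  have "mv n ` HH \<subseteq> hull_code n (PRM n k :: ('a list \<Rightarrow> 'a) set)"
  proof
    fix v :: "'a list \<Rightarrow> 'a" assume "v \<in> mv n ` HH"
    then obtain a where a: "a \<in> HH" "v = mv n a" by auto
    have am: "a \<in> monomials n l" using a by (simp add: HH_def)
    have vl: "v \<in> PRM n l" unfolding PRM_span a(2) using am by (intro fv.span_base) blast
    have "v \<in> dual_code n (PRM n l)" unfolding dual_code_def
    proof (intro CollectI conjI allI impI ballI)
      fix p :: "'a list" assume "p \<notin> proj_points n" thus "v p = 0" by (simp add: a mv_def)
    next
      fix w :: "'a list \<Rightarrow> 'a" assume w: "w \<in> PRM n l"
      obtain cw where cw: "w = (\<Sum>b\<in>monomials n l. fscale (cw b) (mv n b))" using PRM_repr[OF w] by blast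
      have "ip n v w = ip n w v" by (rule ip_comm)
      also have "\<dots> = (\<Sum>b\<in>monomials n l. cw b * T n (\<lambda>i. b i + a i))"
        unfolding cw a(2) by (simp add: ip_sum_left finite_monomials ip_mv)
      also have "\<dots> = 0"
      proof (rule sum.neutral, rule ballI)
        fix b assume b: "b \<in> monomials n l"
        have "(T n (\<lambda>i. b i + a i) :: 'a) = T n (\<lambda>i. a i + b i)" by (simp add: add.commute)
        thus "cw b * (T n (\<lambda>i. b i + a i) :: 'a) = 0" using claimA[OF a(1) b] by simp
      qed
      finally show "(\<Sum>p\<in>proj_points n. v p * w p) = 0" by (simp add: ip_def)
    qed
    hence vk: "v \<in> PRM n k" by (rule dual_l_sub_k)
    have "v \<in> dual_code n (PRM n k)" unfolding dual_code_def
    proof (intro CollectI conjI allI impI ballI)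
      fix p :: "'a list" assume "p \<notin> proj_points n" thus "v p = 0" by (simp add: a mv_def)
    next
      fix w :: "'a list \<Rightarrow> 'a" assume w: "w \<in> PRM n k"
      have "ip n w v = 0" by (rule orth[OF w vl])
      thus "(\<Sum>p\<in>proj_points n. v p * w p) = 0" by (simp add: ip_def mult.commute)
    qed
    thus "v \<in> hull_code n (PRM n k)" using vk by (simp add: hull_code_def)
  qed
  from fv.span_minimal[OF this sub] u show "u \<in> hull_code n (PRM n k)" by blast
qed

lemma mons_BW: "monomials n l \<subseteq> BW m n l"
proof
  fix a assume a: "a \<in> monomials n l"
  have "\<forall>i\<le>n. a i \<le> m" using monomials_le[OF a] lm by (meson le_trans less_imp_le)
  thus "a \<in> BW m n l" using a monomials_tot[OF a] lm by (simp add: BW_def monomials_def)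
qed

lemma dims:
  "code_dim (PRM n l :: ('a list \<Rightarrow> 'a) set) = card (monomials n l)"
  "code_dim (hull_code n (PRM n k :: ('a list \<Rightarrow> 'a) set)) = card HH"
proof -
  have ii: "inj_on (mv n :: _ \<Rightarrow> 'a list \<Rightarrow> 'a) (monomials n l) \<and> fv.independent (mv n ` monomials n l :: ('a list \<Rightarrow> 'a) set)"
    by (rule mv_inj_indep[OF m lpos lm mons_BW])
  show "code_dim (PRM n l :: ('a list \<Rightarrow> 'a) set) = card (monomials n l)"
    unfolding code_dim_def PRM_span using ii
    by (simp add: fv.dim_eq_card_independent card_image)
  have hs: "HH \<subseteq> monomials n l" by (auto simp: HH_def)
  have ind: "fv.independent (mv n ` HH :: ('a list \<Rightarrow> 'a) set)"
    using ii fv.independent_mono[of "mv n ` monomials n l" "mv n ` HH"] hs by blast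
  have inj: "inj_on (mv n :: _ \<Rightarrow> 'a list \<Rightarrow> 'a) HH" using ii inj_on_subset hs by blast
  show "code_dim (hull_code n (PRM n k :: ('a list \<Rightarrow> 'a) set)) = card HH"
    unfolding code_dim_def hull_eq using ind inj
    by (simp add: fv.dim_eq_card_independent card_image)
qed

lemma card_HH: "card HH = card (monomials n l) - (2 * l - m + 1)"
  unfolding HH_def using card_Diff_subset[OF _ EE_sub] finite_subset[OF EE_sub finite_monomials] card_EE
  by simp

end


theorem mainTheorem11:
  fixes n k :: nat
  defines "q \<equiv> card (UNIV :: 'a::{field,finite} set)"
  defines "l \<equiv> n * (q - 1) - k"
  assumes "n \<ge> 1"
    and "real ((n - 1) * (q - 1)) < real k"
    and "real k < real (n * (q - 1)) - (real q - 1) / 2"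
  shows "int (code_dim (hull_code n (PRM n k :: ('a list \<Rightarrow> 'a) set)))
           = int (code_dim (PRM n l :: ('a list \<Rightarrow> 'a) set)) - (2 * int l + 1 - (int q - 1))
       \<and> int (code_dim (PRM n l :: ('a list \<Rightarrow> 'a) set)) - (2 * int l + 1 - (int q - 1))
           = int ((n + l) choose l) - (2 * int l + 1 - (int q - 1))"
proof -
  define m where "m = q - 1"
  have q2: "q \<ge> 2" unfolding q_def by (rule card_ge2)
  have rq: "real q - 1 = real m" using q2 by (simp add: m_def of_nat_diff)
  have h1: "(n - 1) * m < k" using assms(4) unfolding m_def by (simp only: of_nat_less_iff)
  have nq: "n * (q - 1) = n * m" by (simp add: m_def)
  have a5: "real k < real (n * m) - real m / 2" using assms(5) unfolding rq nq .
  hence "2 * real k + real m < 2 * real (n * m)" by linarith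
  hence "real (2 * k + m) < real (2 * (n * m))" by simp
  hence h2: "2 * k + m < 2 * (n * m)" by (simp only: of_nat_less_iff)
  have lm_def: "l = n * m - k" unfolding l_def m_def ..
  have e: "n * m = (n - 1) * m + m" using assms(3) by (cases n) auto
  have kl: "k + l = n * m" using h2 lm_def by simp
  have lm: "l < m" using h1 e kl by linarith
  have l2: "m < 2 * l" using h2 kl by linarith
  have lpos: "0 < l" using l2 by simp
  interpret h: hctx n k l m "TYPE('a)"
    by unfold_locales (use m_def q_def assms(3) lpos lm l2 kl in auto)
  have EEle: "2 * l - m + 1 \<le> card (monomials n l)"
    using card_mono[OF finite_monomials h.EE_sub] h.card_EE by simp
  have d1: "int (code_dim (hull_code n (PRM n k :: ('a list \<Rightarrow> 'a) set))) = int (card (monomials n l)) - int (2 * l - m + 1)"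
    using h.dims(2) h.card_HH EEle by simp
  have d2: "int (2 * l - m + 1) = 2 * int l + 1 - (int q - 1)"
    using l2 q2 unfolding m_def by (simp add: of_nat_diff)
  show ?thesis using d1 d2 h.dims(1) card_monomials[of n l] by simp
qed


end
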